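(* Consider the stochastic $K$-armed bandit with losses supported in $[0,1]$ and run the Regularized-EXP3 algorithm described in the context with mirror map $\phi_\alpha$, $\alpha\in[0,1]$, and parameters $\eta=1/\sqrt T$, $\varepsilon=\log T/\sqrt T$, $\lambda=\gamma_T/\sqrt{KT}$, where $(\gamma_T)$ is a positive sequence with $\gamma_T\le(\log T)^2$ and $\gamma_T/(\log T)^2\to0$, and, if $\alpha\in[0,\tfrac13)$, additionally $\log T/\gamma_T\to0$. Then for all $y\in\Delta_\varepsilon$ and $T\ge K$, $$\mathbb E\left[\langle\mu,\overline x_T-y\rangle\right]\le\frac{C_\alpha(K,T)}{\sqrt T}+\frac{K}{\sqrt T}+\frac1{\sqrt T}\cdot\frac{\gamma_T^2}{(\log T)^2}+\frac{K\gamma_T\log T}{2\sqrt T},$$ where $\overline x_T=\frac1T\sum_{t=1}^Tx_t$ and $C_\alpha(K,T)=\frac{3K\log T}{2}$ if $\alpha\in[0,\tfrac13)$, $C_\alpha(K,T)=3K\log K$ if $\alpha\in[\tfrac13,1]$.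
   Context: Stochastic $K$-armed bandit: arm $a$ has loss distribution $\mathcal P_a$ on $[0,1]$ with mean $\mu_a$; $\mu=(\mu_1,\dots,\mu_K)$; at round $t$ the learner picks $A_t$ and observes $\ell_t\sim\mathcal P_{A_t}$. $\Delta_\varepsilon=\{x\in\mathbb R^K: x_j\ge\varepsilon\ \forall j,\ \sum_jx_j=1\}$; $R_\varepsilon(x)=-\sum_i\ln x_i+\frac1\varepsilon\sum_ix_i$. Mirror maps on $\mathbb R^K_{>0}$: $\phi_\alpha(x)=-\sum_i\frac{x_i^\alpha-\alpha x_i-(1-\alpha)}{\alpha(1-\alpha)}$ for $0<\alpha<1$, $\phi_0(x)=-\sum_i(\log x_i-x_i+1)$, $\phi_1(x)=\sum_i(x_i\log x_i-x_i+1)$. $D_\phi(x,y)=\phi(x)-\phi(y)-\langle\nabla\phi(y),x-y\rangle$. Regularized-EXP3: $z_1=(1/K,\dots,1/K)$; for $t=1,\dots,T$: $x_t=\arg\min_{x\in\Delta_\varepsilon}D_\phi(x,z_t)$; draw $A_t$ with $\mathbb P(A_t=j\mid\text{past})=x_{t,j}$, observe $\ell_t$; $\widehat\ell_{t,j}=\mathbb I\{A_t=j\}\ell_t/x_{t,j}$; $\widetilde\ell_t=\widehat\ell_t+\lambda\nabla R_\varepsilon(x_t)$; $z_{t+1}=\arg\min_x\{\eta\langle\widetilde\ell_t,x\rangle+D_\phi(x,x_t)\}$. *)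

theory Defs
  imports "HOL-Probability.Probability"
begin

text \<open>Arms are the elements of a finite type 'k; K = CARD('k). Vectors in R^K are
  functions 'k => real.\<close>

definition phi_scalar :: "real \<Rightarrow> real \<Rightarrow> real" where
  "phi_scalar \<alpha> s =
     (if \<alpha> = 0 then - (ln s - s + 1)
      else if \<alpha> = 1 then s * ln s - s + 1
      else - ((s powr \<alpha> - \<alpha> * s - (1 - \<alpha>)) / (\<alpha> * (1 - \<alpha>))))"

definition phi :: "real \<Rightarrow> ('k::finite \<Rightarrow> real) \<Rightarrow> real" where
  "phi \<alpha> x = (\<Sum>i\<in>UNIV. phi_scalar \<alpha> (x i))"

definition bregman :: "real \<Rightarrow> ('k::finite \<Rightarrow> real) \<Rightarrow> ('k \<Rightarrow> real) \<Rightarrow> real" where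
  "bregman \<alpha> x y = phi \<alpha> x - phi \<alpha> y - (\<Sum>i\<in>UNIV. deriv (phi_scalar \<alpha>) (y i) * (x i - y i))"

definition simplex_eps :: "real \<Rightarrow> ('k::finite \<Rightarrow> real) set" where
  "simplex_eps \<epsilon> = {x. (\<forall>j. \<epsilon> \<le> x j) \<and> (\<Sum>j\<in>UNIV. x j) = 1}"

definition R_eps :: "real \<Rightarrow> ('k::finite \<Rightarrow> real) \<Rightarrow> real" where
  "R_eps \<epsilon> x = - (\<Sum>i\<in>UNIV. ln (x i)) + (1 / \<epsilon>) * (\<Sum>i\<in>UNIV. x i)"

definition grad_R_eps :: "real \<Rightarrow> ('k::finite \<Rightarrow> real) \<Rightarrow> 'k \<Rightarrow> real" where
  "grad_R_eps \<epsilon> x i = - 1 / x i + 1 / \<epsilon>"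

definition proj :: "real \<Rightarrow> real \<Rightarrow> ('k::finite \<Rightarrow> real) \<Rightarrow> ('k \<Rightarrow> real)" where
  "proj \<alpha> \<epsilon> z = arg_min (\<lambda>x. bregman \<alpha> x z) (\<lambda>x. x \<in> simplex_eps \<epsilon>)"

definition mirror_step :: "real \<Rightarrow> real \<Rightarrow> ('k::finite \<Rightarrow> real) \<Rightarrow> ('k \<Rightarrow> real) \<Rightarrow> ('k \<Rightarrow> real)" where
  "mirror_step \<alpha> \<eta> lt x =
     arg_min (\<lambda>z. \<eta> * (\<Sum>i\<in>UNIV. lt i * z i) + bregman \<alpha> z x) (\<lambda>z. \<forall>i. 0 < z i)"

definition loss_est :: "('k \<Rightarrow> real) \<Rightarrow> 'k \<Rightarrow> real \<Rightarrow> 'k \<Rightarrow> real" where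
  "loss_est x a l j = (if j = a then l / x j else 0)"

definition loss_tilde :: "real \<Rightarrow> real \<Rightarrow> ('k::finite \<Rightarrow> real) \<Rightarrow> 'k \<Rightarrow> real \<Rightarrow> 'k \<Rightarrow> real" where
  "loss_tilde lam \<epsilon> x a l j = loss_est x a l j + lam * grad_R_eps \<epsilon> x j"

definition rexp3_next :: "real \<Rightarrow> real \<Rightarrow> real \<Rightarrow> real \<Rightarrow> ('k::finite \<Rightarrow> real) \<Rightarrow> 'k \<Rightarrow> real \<Rightarrow> ('k \<Rightarrow> real)" where
  "rexp3_next \<alpha> \<eta> \<epsilon> lam x a l = proj \<alpha> \<epsilon> (mirror_step \<alpha> \<eta> (loss_tilde lam \<epsilon> x a l) x)"

definition rexp3_x1 :: "real \<Rightarrow> real \<Rightarrow> ('k::finite \<Rightarrow> real)" where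
  "rexp3_x1 \<alpha> \<epsilon> = proj \<alpha> \<epsilon> (\<lambda>_. 1 / real CARD('k))"

definition mean_loss :: "('k \<Rightarrow> real measure) \<Rightarrow> 'k \<Rightarrow> real" where
  "mean_loss P a = (\<integral>l. l \<partial>P a)"

text \<open>rexp3_expected_cum P alpha eta eps lam n x = E[ sum_(s=1..n) <mu, x_s> ] when the
  algorithm is started at x_1 = x (backward recursion over the random arm A ~ x and
  the random loss l ~ P A).\<close>
primrec rexp3_expected_cum ::
  "('k::finite \<Rightarrow> real measure) \<Rightarrow> real \<Rightarrow> real \<Rightarrow> real \<Rightarrow> real \<Rightarrow> nat \<Rightarrow> ('k \<Rightarrow> real) \<Rightarrow> real" where
  "rexp3_expected_cum P \<alpha> \<eta> \<epsilon> lam 0 x = 0"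
| "rexp3_expected_cum P \<alpha> \<eta> \<epsilon> lam (Suc n) x =
     (\<Sum>i\<in>UNIV. mean_loss P i * x i)
     + (\<Sum>a\<in>UNIV. x a * (\<integral>l. rexp3_expected_cum P \<alpha> \<eta> \<epsilon> lam n (rexp3_next \<alpha> \<eta> \<epsilon> lam x a l) \<partial>P a))"

end

theory Submission
  imports Defs
begin


definition gs :: "real \<Rightarrow> real \<Rightarrow> real" where
  "gs \<alpha> s = (if \<alpha> = 1 then ln s else (1 - s powr (\<alpha> - 1)) / (1 - \<alpha>))"

lemma phi_scalar_deriv:
  assumes "0 \<le> \<alpha>" "\<alpha> \<le> 1" "0 < s"
  shows "(phi_scalar \<alpha> has_real_derivative gs \<alpha> s) (at s)"
proof -
  consider "\<alpha> = 0" | "\<alpha> = 1" | "0 < \<alpha> \<and> \<alpha> < 1" using assms by linarith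
  then show ?thesis
  proof cases
    case 1
    have "((\<lambda>s. - (ln s - s + 1)) has_real_derivative - (1/s - 1 + 0)) (at s)"
      using assms by (auto intro!: derivative_eq_intros)
    moreover have "gs \<alpha> s = - (1/s - 1 + 0)" using 1 assms
      by (simp add: gs_def powr_minus_divide)
    moreover have "phi_scalar \<alpha> = (\<lambda>s. - (ln s - s + 1))" using 1 by (auto simp: phi_scalar_def fun_eq_iff)
    ultimately show ?thesis by simp
  next
    case 2
    have "((\<lambda>s. s * ln s - s + 1) has_real_derivative (1 * ln s + s * (1/s) - 1 + 0)) (at s)"
      using assms by (auto intro!: derivative_eq_intros)
    moreover have "gs \<alpha> s = 1 * ln s + s * (1/s) - 1 + 0" using 2 assms by (simp add: gs_def)
    moreover have "phi_scalar \<alpha> = (\<lambda>s. s * ln s - s + 1)" using 2 by (auto simp: phi_scalar_def fun_eq_iff)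
    ultimately show ?thesis by simp
  next
    case 3
    then have a3: "0 < \<alpha>" "\<alpha> < 1" by auto
    have "((\<lambda>s. - ((s powr \<alpha> - \<alpha> * s - (1 - \<alpha>)) / (\<alpha> * (1 - \<alpha>)))) has_real_derivative
        - ((\<alpha> * s powr (\<alpha> - 1) - \<alpha> * 1 - 0) / (\<alpha> * (1 - \<alpha>)))) (at s)"
      using assms a3 by (auto intro!: derivative_eq_intros)
    moreover have "gs \<alpha> s = - ((\<alpha> * s powr (\<alpha> - 1) - \<alpha> * 1 - 0) / (\<alpha> * (1 - \<alpha>)))"
      using a3 by (simp add: gs_def field_simps)
    moreover have "phi_scalar \<alpha> = (\<lambda>s. - ((s powr \<alpha> - \<alpha> * s - (1 - \<alpha>)) / (\<alpha> * (1 - \<alpha>))))"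
      using a3 by (auto simp: phi_scalar_def fun_eq_iff)
    ultimately show ?thesis by simp
  qed
qed

lemma deriv_phi_scalar:
  assumes "0 \<le> \<alpha>" "\<alpha> \<le> 1" "0 < s"
  shows "deriv (phi_scalar \<alpha>) s = gs \<alpha> s"
  using phi_scalar_deriv[OF assms] by (rule DERIV_imp_deriv)

lemma gs_deriv:
  assumes "0 \<le> \<alpha>" "\<alpha> \<le> 1" "0 < s"
  shows "(gs \<alpha> has_real_derivative s powr (\<alpha> - 2)) (at s)"
proof (cases "\<alpha> = 1")
  case True
  have "(ln has_real_derivative 1/s) (at s)" using assms by (auto intro!: derivative_eq_intros)
  moreover have "1/s = s powr (\<alpha> - 2)" using True assms by (simp add: powr_minus_divide)
  moreover have "gs \<alpha> = ln" using True by (auto simp: gs_def fun_eq_iff)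
  ultimately show ?thesis by simp
next
  case False
  have "((\<lambda>s. (1 - s powr (\<alpha> - 1)) / (1 - \<alpha>)) has_real_derivative
      (0 - (\<alpha> - 1) * s powr (\<alpha> - 1 - 1)) / (1 - \<alpha>)) (at s)"
    using assms False by (auto intro!: derivative_eq_intros)
  moreover have "(0 - (\<alpha> - 1) * s powr (\<alpha> - 1 - 1)) / (1 - \<alpha>) = s powr (\<alpha> - 2)"
    using False assms by (simp add: field_simps)
  moreover have "gs \<alpha> = (\<lambda>s. (1 - s powr (\<alpha> - 1)) / (1 - \<alpha>))" using False by (auto simp: gs_def fun_eq_iff)
  ultimately show ?thesis by simp
qed

lemma gs_strict_mono:
  assumes "0 \<le> \<alpha>" "\<alpha> \<le> 1" "0 < a" "a < b"
  shows "gs \<alpha> a < gs \<alpha> b"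
proof (cases "\<alpha> = 1")
  case True then show ?thesis using assms by (simp add: gs_def)
next
  case False
  have "b powr (\<alpha> - 1) < a powr (\<alpha> - 1)"
    using assms False by (intro powr_less_mono2_neg) auto
  then show ?thesis using False assms by (simp add: gs_def divide_strict_right_mono)
qed

lemma gs_mono_iff:
  assumes "0 \<le> \<alpha>" "\<alpha> \<le> 1" "0 < a" "0 < b"
  shows "gs \<alpha> a \<le> gs \<alpha> b \<longleftrightarrow> a \<le> b"
proof
  assume "gs \<alpha> a \<le> gs \<alpha> b"
  then show "a \<le> b" using gs_strict_mono[OF assms(1,2) assms(4), of a] by (meson not_le)
next
  assume "a \<le> b"
  then show "gs \<alpha> a \<le> gs \<alpha> b" using gs_strict_mono[OF assms(1,2) assms(3), of b]
    by (cases "a = b") auto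
qed

lemma gs_lower:
  assumes "0 \<le> \<alpha>" "\<alpha> \<le> 1" "0 < z" "z \<le> x"
  shows "x powr (\<alpha> - 2) * (x - z) \<le> gs \<alpha> x - gs \<alpha> z"
proof (cases "z = x")
  case True then show ?thesis by simp
next
  case False
  then have zx: "z < x" using assms by simp
  obtain \<xi> where \<xi>: "z < \<xi>" "\<xi> < x" "gs \<alpha> x - gs \<alpha> z = (x - z) * \<xi> powr (\<alpha> - 2)"
    using MVT2[OF zx, of "gs \<alpha>" "\<lambda>s. s powr (\<alpha> - 2)"] gs_deriv[OF assms(1,2)] assms by force
  have "x powr (\<alpha> - 2) \<le> \<xi> powr (\<alpha> - 2)"
    using \<xi> assms by (intro powr_mono2') auto
  then show ?thesis using \<xi> zx by (simp add: mult.commute mult_right_mono)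
qed

definition ds :: "real \<Rightarrow> real \<Rightarrow> real \<Rightarrow> real" where
  "ds \<alpha> a b = phi_scalar \<alpha> a - phi_scalar \<alpha> b - gs \<alpha> b * (a - b)"

lemma ds_pos:
  assumes "0 \<le> \<alpha>" "\<alpha> \<le> 1" "0 < a" "0 < b" "a \<noteq> b"
  shows "0 < ds \<alpha> a b"
proof (cases "a < b")
  case True
  obtain \<xi> where \<xi>: "a < \<xi>" "\<xi> < b" "phi_scalar \<alpha> b - phi_scalar \<alpha> a = (b - a) * gs \<alpha> \<xi>"
    using MVT2[OF True, of "phi_scalar \<alpha>" "gs \<alpha>"] phi_scalar_deriv[OF assms(1,2)] assms by force
  have "gs \<alpha> \<xi> < gs \<alpha> b" using gs_strict_mono[OF assms(1,2)] \<xi> assms by auto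
  then have "(b - a) * gs \<alpha> \<xi> < (b - a) * gs \<alpha> b" using True by simp
  then show ?thesis using \<xi> by (simp add: ds_def algebra_simps)
next
  case False
  then have ba: "b < a" using assms by simp
  obtain \<xi> where \<xi>: "b < \<xi>" "\<xi> < a" "phi_scalar \<alpha> a - phi_scalar \<alpha> b = (a - b) * gs \<alpha> \<xi>"
    using MVT2[OF ba, of "phi_scalar \<alpha>" "gs \<alpha>"] phi_scalar_deriv[OF assms(1,2)] assms by force
  have "gs \<alpha> b < gs \<alpha> \<xi>" using gs_strict_mono[OF assms(1,2)] \<xi> assms by auto
  then have "(a - b) * gs \<alpha> b < (a - b) * gs \<alpha> \<xi>" using ba by simp
  then show ?thesis using \<xi> by (simp add: ds_def algebra_simps)
qed

lemma ds_nonneg: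
  assumes "0 \<le> \<alpha>" "\<alpha> \<le> 1" "0 < a" "0 < b"
  shows "0 \<le> ds \<alpha> a b"
  using ds_pos[OF assms] by (cases "a = b") (auto simp: ds_def)

lemma gs_surj:
  assumes "0 \<le> \<alpha>" "\<alpha> \<le> 1" "0 < x" "c \<le> gs \<alpha> x"
  shows "\<exists>z>0. gs \<alpha> z = c"
proof (cases "\<alpha> = 1")
  case True then show ?thesis by (intro exI[of _ "exp c"]) (simp add: gs_def)
next
  case False
  then have a1: "\<alpha> < 1" using assms by simp
  have "0 < x powr (\<alpha> - 1)" using assms by simp
  moreover have "c * (1 - \<alpha>) \<le> 1 - x powr (\<alpha> - 1)"
    using assms a1 by (simp add: gs_def field_simps)
  ultimately have "c * (1 - \<alpha>) < 1" by linarith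
  then have pos: "0 < 1 - (1 - \<alpha>) * c" by (simp add: algebra_simps)
  define z where "z = (1 - (1 - \<alpha>) * c) powr (1 / (\<alpha> - 1))"
  have "z powr (\<alpha> - 1) = 1 - (1 - \<alpha>) * c"
    unfolding z_def using pos a1 by (simp add: powr_powr)
  then have "gs \<alpha> z = c" using a1 by (simp add: gs_def)
  moreover have "0 < z" using pos by (simp add: z_def)
  ultimately show ?thesis by blast
qed



lemma bregman_eq:
  assumes "0 \<le> \<alpha>" "\<alpha> \<le> 1" "\<And>i. 0 < y i"
  shows "bregman \<alpha> x y = (\<Sum>i\<in>UNIV. ds \<alpha> (x i) (y i))"
  using assms by (simp add: bregman_def phi_def ds_def deriv_phi_scalar sum_subtractf)

lemma mirror_step_char:
  fixes x lt :: "'k::finite \<Rightarrow> real"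
  assumes "0 \<le> \<alpha>" "\<alpha> \<le> 1" "\<And>i. 0 < x i" "\<And>i. 0 \<le> lt i" "0 \<le> \<eta>"
  shows "\<forall>i. 0 < mirror_step \<alpha> \<eta> lt x i \<and> gs \<alpha> (mirror_step \<alpha> \<eta> lt x i) = gs \<alpha> (x i) - \<eta> * lt i"
proof -
  have "\<forall>i. \<exists>w>0. gs \<alpha> w = gs \<alpha> (x i) - \<eta> * lt i"
  proof
    fix i
    have "0 \<le> \<eta> * lt i" using assms(4,5) by simp
    then show "\<exists>w>0. gs \<alpha> w = gs \<alpha> (x i) - \<eta> * lt i"
      using gs_surj[OF assms(1,2) assms(3)[of i], of "gs \<alpha> (x i) - \<eta> * lt i"] by simp
  qed
  then obtain zs where zs: "\<And>i. 0 < zs i" "\<And>i. gs \<alpha> (zs i) = gs \<alpha> (x i) - \<eta> * lt i"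
    by metis
  define Ob where "Ob = (\<lambda>z. \<eta> * (\<Sum>i\<in>UNIV. lt i * z i) + bregman \<alpha> z x)"
  have key: "Ob z - Ob zs = (\<Sum>i\<in>UNIV. ds \<alpha> (z i) (zs i))" for z
  proof -
    have "Ob z - Ob zs = (\<Sum>i\<in>UNIV. \<eta> * lt i * (z i - zs i) + ds \<alpha> (z i) (x i) - ds \<alpha> (zs i) (x i))"
    proof -
      have "Ob z - Ob zs = \<eta> * (\<Sum>i\<in>UNIV. lt i * z i) - \<eta> * (\<Sum>i\<in>UNIV. lt i * zs i)
         + (\<Sum>i\<in>UNIV. ds \<alpha> (z i) (x i)) - (\<Sum>i\<in>UNIV. ds \<alpha> (zs i) (x i))"
        unfolding Ob_def bregman_eq[OF assms(1,2) assms(3)] by simp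
      also have "\<dots> = (\<Sum>i\<in>UNIV. \<eta> * lt i * (z i - zs i) + ds \<alpha> (z i) (x i) - ds \<alpha> (zs i) (x i))"
        unfolding sum_distrib_left sum_subtractf[symmetric] sum.distrib[symmetric]
        by (intro sum.cong refl) (simp add: algebra_simps)
      finally show ?thesis .
    qed
    also have "\<dots> = (\<Sum>i\<in>UNIV. ds \<alpha> (z i) (zs i))"
      by (intro sum.cong refl) (simp add: ds_def zs(2) algebra_simps)
    finally show ?thesis .
  qed
  have min: "Ob zs \<le> Ob z" if "\<forall>i. 0 < z i" for z
    using key[of z] ds_nonneg[OF assms(1,2)] that zs(1)
    by (metis (no_types, lifting) diff_ge_0_iff_ge sum_nonneg)
  have isz: "is_arg_min Ob (\<lambda>z. \<forall>i. 0 < z i) zs"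
    unfolding is_arg_min_linorder using zs(1) min by auto
  define z where "z = mirror_step \<alpha> \<eta> lt x"
  have "is_arg_min Ob (\<lambda>z. \<forall>i. 0 < z i) z"
    unfolding z_def mirror_step_def Ob_def[symmetric] arg_min_def
    by (rule someI[of _ zs]) (rule isz)
  then have zpos: "\<forall>i. 0 < z i" and "Ob z \<le> Ob zs"
    unfolding is_arg_min_linorder using isz by (auto simp: is_arg_min_linorder)
  then have "(\<Sum>i\<in>UNIV. ds \<alpha> (z i) (zs i)) \<le> 0" using key[of z] by simp
  moreover have "\<And>i. 0 \<le> ds \<alpha> (z i) (zs i)" using ds_nonneg[OF assms(1,2)] zpos zs(1) by auto
  ultimately have "(\<Sum>i\<in>UNIV. ds \<alpha> (z i) (zs i)) = 0"
    by (meson order_antisym sum_nonneg)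
  then have "\<And>i. ds \<alpha> (z i) (zs i) = 0"
    using sum_nonneg_eq_0_iff[of UNIV "\<lambda>i. ds \<alpha> (z i) (zs i)"] \<open>\<And>i. 0 \<le> ds \<alpha> (z i) (zs i)\<close> by simp
  then have "\<And>i. z i = zs i" using ds_pos[OF assms(1,2)] zpos zs(1) by (metis less_irrefl)
  then show ?thesis using zs zpos unfolding z_def by auto
qed



lemma simplex_compact:
  assumes "0 \<le> \<epsilon>"
  shows "compact (simplex_eps \<epsilon> :: ('k::finite \<Rightarrow> real) set)"
proof -
  have c1: "compact (PiE UNIV (\<lambda>_::'k. {\<epsilon>..1::real}))"
  proof -
    have "compactin (product_topology (\<lambda>_::'k. euclidean) UNIV) (PiE UNIV (\<lambda>_::'k. {\<epsilon>..1::real}))"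
      by (subst compactin_PiE) (auto simp: compactin_euclidean_iff)
    then show ?thesis by (simp add: euclidean_product_topology compactin_euclidean_iff)
  qed
  have c2: "closed {x::'k \<Rightarrow> real. (\<Sum>j\<in>UNIV. x j) = 1}"
    by (intro closed_Collect_eq continuous_intros continuous_on_product_coordinates)
  have "simplex_eps \<epsilon> = PiE UNIV (\<lambda>_::'k. {\<epsilon>..1::real}) \<inter> {x. (\<Sum>j\<in>UNIV. x j) = 1}"
  proof (intro set_eqI iffI)
    fix x :: "'k \<Rightarrow> real"
    assume x: "x \<in> simplex_eps \<epsilon>"
    have "x j \<le> 1" for j
    proof -
      have "x j \<le> (\<Sum>j\<in>UNIV. x j)"
        using x assms by (intro member_le_sum) (auto simp: simplex_eps_def intro: order_trans)
      then show ?thesis using x by (simp add: simplex_eps_def)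
    qed
    then show "x \<in> PiE UNIV (\<lambda>_::'k. {\<epsilon>..1::real}) \<inter> {x. (\<Sum>j\<in>UNIV. x j) = 1}"
      using x by (auto simp: simplex_eps_def)
  qed (auto simp: simplex_eps_def)
  then show ?thesis using c1 c2 by auto
qed

lemma simplex_pos:
  "0 < \<epsilon> \<Longrightarrow> x \<in> simplex_eps \<epsilon> \<Longrightarrow> 0 < x i"
  by (auto simp: simplex_eps_def intro: less_le_trans)

lemma simplex_le1:
  assumes "0 \<le> \<epsilon>" "x \<in> simplex_eps \<epsilon>"
  shows "x (i::'k::finite) \<le> 1"
proof -
  have "x i \<le> (\<Sum>j\<in>UNIV. x j)"
    using assms by (intro member_le_sum) (auto simp: simplex_eps_def intro: order_trans)
  then show ?thesis using assms by (simp add: simplex_eps_def)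
qed

lemma phi_line_deriv:
  assumes "0 \<le> \<alpha>" "\<alpha> \<le> 1" "0 < a"
  shows "((\<lambda>t. phi_scalar \<alpha> (a + t * b)) has_real_derivative gs \<alpha> a * b) (at 0)"
proof -
  have g: "((\<lambda>t. a + t * b) has_real_derivative b) (at 0)"
    by (auto intro!: derivative_eq_intros)
  have "(phi_scalar \<alpha> has_real_derivative gs \<alpha> a) (at ((\<lambda>t. a + t * b) 0))"
    using phi_scalar_deriv[OF assms] by simp
  from DERIV_chain2[OF this g] show ?thesis by simp
qed

lemma proj_props:
  fixes z :: "'k::finite \<Rightarrow> real"
  assumes "0 \<le> \<alpha>" "\<alpha> \<le> 1" "0 < \<epsilon>" "simplex_eps \<epsilon> \<noteq> ({} :: ('k \<Rightarrow> real) set)" "\<And>i. 0 < z i"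
  shows "proj \<alpha> \<epsilon> z \<in> simplex_eps \<epsilon>"
    "\<And>y. y \<in> simplex_eps \<epsilon> \<Longrightarrow> bregman \<alpha> y (proj \<alpha> \<epsilon> z) \<le> bregman \<alpha> y z"
proof -
  define S where "S = (simplex_eps \<epsilon> :: ('k \<Rightarrow> real) set)"
  define F where "F = (\<lambda>x. bregman \<alpha> x z)"
  have Feq: "F x = (\<Sum>i\<in>UNIV. ds \<alpha> (x i) (z i))" for x
    unfolding F_def by (rule bregman_eq[OF assms(1,2) assms(5)])
  have cont_phi: "continuous_on {\<epsilon>..} (phi_scalar \<alpha>)"
    by (intro continuous_at_imp_continuous_on ballI DERIV_isCont[OF phi_scalar_deriv[OF assms(1,2)]])
      (use assms in auto)
  have "continuous_on S F"
  proof -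
    have ci: "continuous_on S (\<lambda>x. phi_scalar \<alpha> (x i))" for i
      by (rule continuous_on_compose2[OF cont_phi, of S "\<lambda>x. x i"])
         (auto simp: S_def simplex_eps_def intro: continuous_on_subset[OF continuous_on_product_coordinates])
    have cj: "continuous_on S (\<lambda>x. x i)" for i
      by (rule continuous_on_subset[OF continuous_on_product_coordinates]) auto
    show ?thesis unfolding Feq ds_def
      by (intro continuous_intros ci cj)
  qed
  then obtain xm where xm: "xm \<in> S" "\<And>y. y \<in> S \<Longrightarrow> F xm \<le> F y"
    using continuous_attains_inf[OF simplex_compact[of \<epsilon>]] assms unfolding S_def by force
  have "is_arg_min F (\<lambda>x. x \<in> S) (proj \<alpha> \<epsilon> z)"
    unfolding proj_def F_def[symmetric] S_def[symmetric] arg_min_def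
    by (rule someI[of _ xm]) (use xm in \<open>auto simp: is_arg_min_linorder\<close>)
  then have pS: "proj \<alpha> \<epsilon> z \<in> S" and pmin: "\<And>y. y \<in> S \<Longrightarrow> F (proj \<alpha> \<epsilon> z) \<le> F y"
    by (auto simp: is_arg_min_linorder)
  then show "proj \<alpha> \<epsilon> z \<in> simplex_eps \<epsilon>" by (simp add: S_def)
  fix y :: "'k \<Rightarrow> real" assume yS: "y \<in> simplex_eps \<epsilon>"
  define p where "p = proj \<alpha> \<epsilon> z"
  have ppos: "\<And>i. 0 < p i" using pS assms(3) by (auto simp: p_def S_def intro: simplex_pos)
  have ypos: "\<And>i. 0 < y i" using yS assms(3) by (auto intro: simplex_pos)
  define d where "d = (\<lambda>i. y i - p i)"
  define G where "G = (\<lambda>t. F (\<lambda>i. p i + t * d i))"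
  have Gder: "(G has_real_derivative (\<Sum>i\<in>UNIV. (gs \<alpha> (p i) - gs \<alpha> (z i)) * d i)) (at 0)"
  proof -
    have "((\<lambda>t. \<Sum>i\<in>UNIV. ds \<alpha> (p i + t * d i) (z i)) has_real_derivative
           (\<Sum>i\<in>UNIV. gs \<alpha> (p i + 0 * d i) * (0 + 1 * d i) - 0 - gs \<alpha> (z i) * (0 + 1 * d i - 0))) (at 0)"
      unfolding ds_def
      by (intro derivative_eq_intros DERIV_chain2[OF phi_scalar_deriv[OF assms(1,2)]] refl)
         (use ppos in \<open>auto intro: phi_line_deriv[OF assms(1,2)]\<close>)
    then show ?thesis unfolding G_def Feq by (simp add: algebra_simps)
  qed
  have seg: "(\<lambda>i. p i + t * d i) \<in> S" if "0 \<le> t" "t \<le> 1" for t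
  proof -
    have "(\<lambda>i. p i + t * d i) = (\<lambda>i. (1 - t) * p i + t * y i)" by (auto simp: d_def algebra_simps)
    moreover have "(\<lambda>i. (1 - t) * p i + t * y i) \<in> S"
    proof -
      have "\<epsilon> \<le> (1 - t) * p i + t * y i" for i
      proof -
        have "(1 - t) * \<epsilon> \<le> (1 - t) * p i" using pS that by (intro mult_left_mono) (auto simp: S_def simplex_eps_def p_def)
        moreover have "t * \<epsilon> \<le> t * y i" using yS that by (intro mult_left_mono) (auto simp: simplex_eps_def)
        ultimately show ?thesis by (simp add: algebra_simps)
      qed
      moreover have "(\<Sum>i\<in>UNIV. (1 - t) * p i + t * y i) = 1"
        using pS yS by (simp add: sum.distrib sum_distrib_left[symmetric] S_def simplex_eps_def p_def)
      ultimately show ?thesis by (simp add: S_def simplex_eps_def)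
    qed
    ultimately show ?thesis by simp
  qed
  have first: "0 \<le> (\<Sum>i\<in>UNIV. (gs \<alpha> (p i) - gs \<alpha> (z i)) * d i)"
  proof (rule ccontr)
    assume "\<not> ?thesis"
    then obtain r where r: "r > 0" "\<And>h. h > 0 \<Longrightarrow> h < r \<Longrightarrow> G (0 + h) < G 0"
      using DERIV_neg_dec_right[OF Gder] by force
    define h where "h = min (r/2) 1"
    have "h > 0" "h < r" "h \<le> 1" using r by (auto simp: h_def)
    then have "G h < G 0" using r(2)[of h] by simp
    moreover have "G 0 = F p" by (simp add: G_def)
    moreover have "F p \<le> G h" unfolding G_def p_def
      using pmin seg[of h] \<open>h > 0\<close> \<open>h \<le> 1\<close> by (simp add: p_def)
    ultimately show False by simp
  qed
  have "bregman \<alpha> y z - bregman \<alpha> y p - bregman \<alpha> p z = (\<Sum>i\<in>UNIV. (gs \<alpha> (p i) - gs \<alpha> (z i)) * d i)"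
  proof -
    have "bregman \<alpha> y z - bregman \<alpha> y p - bregman \<alpha> p z =
       (\<Sum>i\<in>UNIV. ds \<alpha> (y i) (z i) - ds \<alpha> (y i) (p i) - ds \<alpha> (p i) (z i))"
    proof -
      have bz: "\<And>x. bregman \<alpha> x z = (\<Sum>i\<in>UNIV. ds \<alpha> (x i) (z i))"
        by (rule bregman_eq[OF assms(1,2)]) (rule assms(5))
      have bp: "\<And>x. bregman \<alpha> x p = (\<Sum>i\<in>UNIV. ds \<alpha> (x i) (p i))"
        by (rule bregman_eq[OF assms(1,2)]) (rule ppos)
      show ?thesis unfolding bz bp by (simp add: sum_subtractf)
    qed
    also have "\<dots> = (\<Sum>i\<in>UNIV. (gs \<alpha> (p i) - gs \<alpha> (z i)) * d i)"
      by (intro sum.cong refl) (simp add: ds_def d_def algebra_simps)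
    finally show ?thesis .
  qed
  moreover have "0 \<le> bregman \<alpha> p z"
  proof -
    have bz: "bregman \<alpha> p z = (\<Sum>i\<in>UNIV. ds \<alpha> (p i) (z i))"
      by (rule bregman_eq[OF assms(1,2)]) (rule assms(5))
    show ?thesis unfolding bz using ds_nonneg[OF assms(1,2)] ppos assms(5)
      by (simp add: sum_nonneg)
  qed
  ultimately show "bregman \<alpha> y (proj \<alpha> \<epsilon> z) \<le> bregman \<alpha> y z"
    using first unfolding p_def by linarith
qed



lemma omd_step:
  fixes x y lt :: "'k::finite \<Rightarrow> real"
  assumes "0 \<le> \<alpha>" "\<alpha> \<le> 1" "0 < \<epsilon>" "x \<in> simplex_eps \<epsilon>" "y \<in> simplex_eps \<epsilon>"
    "\<And>i. 0 \<le> lt i" "0 < \<eta>"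
  shows "proj \<alpha> \<epsilon> (mirror_step \<alpha> \<eta> lt x) \<in> simplex_eps \<epsilon>"
    "bregman \<alpha> y (proj \<alpha> \<epsilon> (mirror_step \<alpha> \<eta> lt x)) \<le> bregman \<alpha> y x
       - \<eta> * (\<Sum>i\<in>UNIV. lt i * (x i - y i)) + \<eta>^2 * (\<Sum>i\<in>UNIV. x i powr (2 - \<alpha>) * (lt i)^2)"
proof -
  have xpos: "\<And>i. 0 < x i" using assms(3,4) by (rule simplex_pos)
  define z where "z = mirror_step \<alpha> \<eta> lt x"
  have zc: "\<forall>i. 0 < z i \<and> gs \<alpha> (z i) = gs \<alpha> (x i) - \<eta> * lt i"
    unfolding z_def by (rule mirror_step_char[OF assms(1,2)]) (use xpos assms(6,7) in auto)
  then have zpos: "\<And>i. 0 < z i" and zg: "\<And>i. gs \<alpha> (x i) - gs \<alpha> (z i) = \<eta> * lt i" by auto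
  have ne: "simplex_eps \<epsilon> \<noteq> ({} :: ('k \<Rightarrow> real) set)" using assms(5) by auto
  show "proj \<alpha> \<epsilon> (mirror_step \<alpha> \<eta> lt x) \<in> simplex_eps \<epsilon>"
    using proj_props(1)[OF assms(1,2,3) ne zpos] by (simp add: z_def)
  have p1: "bregman \<alpha> y (proj \<alpha> \<epsilon> z) \<le> bregman \<alpha> y z"
    using proj_props(2)[OF assms(1,2,3) ne zpos assms(5)] .
  have bz: "\<And>w. bregman \<alpha> w z = (\<Sum>i\<in>UNIV. ds \<alpha> (w i) (z i))"
    by (rule bregman_eq[OF assms(1,2)]) (rule zpos)
  have bx: "\<And>w. bregman \<alpha> w x = (\<Sum>i\<in>UNIV. ds \<alpha> (w i) (x i))"
    by (rule bregman_eq[OF assms(1,2)]) (rule xpos)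
  have three: "bregman \<alpha> y z = bregman \<alpha> y x + bregman \<alpha> x z - \<eta> * (\<Sum>i\<in>UNIV. lt i * (x i - y i))"
  proof -
    have "bregman \<alpha> y z - bregman \<alpha> y x - bregman \<alpha> x z
        = (\<Sum>i\<in>UNIV. ds \<alpha> (y i) (z i) - ds \<alpha> (y i) (x i) - ds \<alpha> (x i) (z i))"
      unfolding bz bx by (simp add: sum_subtractf)
    also have "\<dots> = (\<Sum>i\<in>UNIV. - (\<eta> * (lt i * (x i - y i))))"
    proof (intro sum.cong refl)
      fix i
      have "ds \<alpha> (y i) (z i) - ds \<alpha> (y i) (x i) - ds \<alpha> (x i) (z i) = (gs \<alpha> (x i) - gs \<alpha> (z i)) * (y i - x i)"
        by (simp add: ds_def algebra_simps)
      then show "ds \<alpha> (y i) (z i) - ds \<alpha> (y i) (x i) - ds \<alpha> (x i) (z i) = - (\<eta> * (lt i * (x i - y i)))"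
        using zg[of i] by (simp add: algebra_simps)
    qed
    also have "\<dots> = - (\<eta> * (\<Sum>i\<in>UNIV. lt i * (x i - y i)))"
      by (simp add: sum_negf sum_distrib_left)
    finally show ?thesis by simp
  qed
  have local: "ds \<alpha> (x i) (z i) \<le> \<eta>^2 * (x i powr (2 - \<alpha>) * (lt i)^2)" for i
  proof -
    have "ds \<alpha> (x i) (z i) + ds \<alpha> (z i) (x i) = (gs \<alpha> (x i) - gs \<alpha> (z i)) * (x i - z i)"
      by (simp add: ds_def algebra_simps)
    moreover have "0 \<le> ds \<alpha> (z i) (x i)" using ds_nonneg[OF assms(1,2) zpos xpos] .
    ultimately have 1: "ds \<alpha> (x i) (z i) \<le> \<eta> * lt i * (x i - z i)" using zg[of i] by simp
    have "0 \<le> \<eta> * lt i" using assms(6)[of i] assms(7) by simp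
    then have "gs \<alpha> (z i) \<le> gs \<alpha> (x i)" using zg[of i] by linarith
    then have zx: "z i \<le> x i" using gs_mono_iff[OF assms(1,2) zpos xpos] by simp
    have "x i powr (\<alpha> - 2) * (x i - z i) \<le> \<eta> * lt i"
      using gs_lower[OF assms(1,2) zpos zx] zg[of i] by simp
    then have "x i powr (2 - \<alpha>) * (x i powr (\<alpha> - 2) * (x i - z i)) \<le> x i powr (2 - \<alpha>) * (\<eta> * lt i)"
      by (intro mult_left_mono) auto
    moreover have "x i powr (2 - \<alpha>) * x i powr (\<alpha> - 2) = 1"
      using xpos[of i] by (simp add: powr_add[symmetric])
    ultimately have 2: "x i - z i \<le> x i powr (2 - \<alpha>) * (\<eta> * lt i)"
      by (simp add: mult.assoc[symmetric])
    have "\<eta> * lt i * (x i - z i) \<le> \<eta> * lt i * (x i powr (2 - \<alpha>) * (\<eta> * lt i))"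
      using 2 assms(6)[of i] assms(7) by (intro mult_left_mono) auto
    then show ?thesis using 1 by (simp add: power2_eq_square algebra_simps)
  qed
  have "bregman \<alpha> x z \<le> (\<Sum>i\<in>UNIV. \<eta>^2 * (x i powr (2 - \<alpha>) * (lt i)^2))"
    unfolding bz by (intro sum_mono local)
  also have "\<dots> = \<eta>^2 * (\<Sum>i\<in>UNIV. x i powr (2 - \<alpha>) * (lt i)^2)"
    by (simp add: sum_distrib_left)
  finally show "bregman \<alpha> y (proj \<alpha> \<epsilon> (mirror_step \<alpha> \<eta> lt x)) \<le> bregman \<alpha> y x
       - \<eta> * (\<Sum>i\<in>UNIV. lt i * (x i - y i)) + \<eta>^2 * (\<Sum>i\<in>UNIV. x i powr (2 - \<alpha>) * (lt i)^2)"
    using p1 three unfolding z_def by linarith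
qed



lemma lt_nonneg:
  assumes "0 < \<epsilon>" "x \<in> simplex_eps \<epsilon>" "0 \<le> lam" "0 \<le> l"
  shows "0 \<le> loss_tilde lam \<epsilon> x a l i"
proof -
  have xi: "\<epsilon> \<le> x i" using assms(2) by (simp add: simplex_eps_def)
  then have "1 / x i \<le> 1 / \<epsilon>" using assms(1) by (simp add: frac_le)
  then have "0 \<le> grad_R_eps \<epsilon> x i" by (simp add: grad_R_eps_def)
  moreover have "0 \<le> loss_est x a l i" using assms xi by (cases "i = a") (auto simp: loss_est_def)
  ultimately show ?thesis using assms(3) by (simp add: loss_tilde_def)
qed

lemma grad_bounds:
  assumes "0 < \<epsilon>" "x \<in> simplex_eps \<epsilon>" "0 \<le> lam"
  shows "0 \<le> lam * grad_R_eps \<epsilon> x i" "lam * grad_R_eps \<epsilon> x i \<le> lam / \<epsilon>"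
proof -
  have xi: "\<epsilon> \<le> x i" using assms(2) by (simp add: simplex_eps_def)
  then have "1 / x i \<le> 1 / \<epsilon>" using assms(1) by (simp add: frac_le)
  then have "0 \<le> grad_R_eps \<epsilon> x i" by (simp add: grad_R_eps_def)
  then show "0 \<le> lam * grad_R_eps \<epsilon> x i" using assms(3) by simp
  have "0 < x i" using xi assms(1) by simp
  then have "grad_R_eps \<epsilon> x i \<le> 1 / \<epsilon>" by (simp add: grad_R_eps_def)
  then show "lam * grad_R_eps \<epsilon> x i \<le> lam / \<epsilon>" using assms(3)
    using mult_left_mono by fastforce
qed

lemma lin_bound:
  fixes x y :: "'k::finite \<Rightarrow> real"
  assumes "0 < \<epsilon>" "x \<in> simplex_eps \<epsilon>" "y \<in> simplex_eps \<epsilon>" "0 \<le> lam"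
  shows "- (\<Sum>i\<in>UNIV. loss_tilde lam \<epsilon> x a l i * (x i - y i))
         \<le> - (l / x a * (x a - y a)) + lam * (real CARD('k) - 1)"
proof -
  have xpos: "\<And>i. 0 < x i" using assms(1,2) by (rule simplex_pos)
  have x1: "\<And>i. x i \<le> 1" using assms(1,2) by (intro simplex_le1) auto
  have ynn: "\<And>i. 0 \<le> y i" using assms(1,3) simplex_pos[OF assms(1,3)] less_imp_le by blast
  have s1: "(\<Sum>i\<in>UNIV. x i) = 1" "(\<Sum>i\<in>UNIV. y i) = 1" using assms(2,3) by (auto simp: simplex_eps_def)
  have split: "(\<Sum>i\<in>UNIV. loss_tilde lam \<epsilon> x a l i * (x i - y i))
     = (\<Sum>i\<in>UNIV. loss_est x a l i * (x i - y i)) + lam * (\<Sum>i\<in>UNIV. grad_R_eps \<epsilon> x i * (x i - y i))"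
  proof -
    have "(\<Sum>i\<in>UNIV. loss_tilde lam \<epsilon> x a l i * (x i - y i))
      = (\<Sum>i\<in>UNIV. loss_est x a l i * (x i - y i) + lam * (grad_R_eps \<epsilon> x i * (x i - y i)))"
      by (intro sum.cong refl) (simp add: loss_tilde_def algebra_simps)
    then show ?thesis by (simp add: sum.distrib sum_distrib_left)
  qed
  have e: "(\<Sum>i\<in>UNIV. loss_est x a l i * (x i - y i)) = l / x a * (x a - y a)"
  proof -
    have "(\<Sum>i\<in>UNIV. loss_est x a l i * (x i - y i)) = (\<Sum>i\<in>UNIV. if i = a then l / x a * (x a - y a) else 0)"
      by (intro sum.cong refl) (auto simp: loss_est_def)
    then show ?thesis by simp
  qed
  have "(\<Sum>i\<in>UNIV. grad_R_eps \<epsilon> x i * (x i - y i)) = (\<Sum>i\<in>UNIV. y i / x i - 1 + (x i - y i) / \<epsilon>)"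
  proof (intro sum.cong refl)
    fix i
    have "x i \<noteq> 0" using xpos[of i] by simp
    then show "grad_R_eps \<epsilon> x i * (x i - y i) = y i / x i - 1 + (x i - y i) / \<epsilon>"
      by (simp add: grad_R_eps_def field_simps)
  qed
  also have "\<dots> = (\<Sum>i\<in>UNIV. y i / x i) - real CARD('k) + ((\<Sum>i\<in>UNIV. x i) - (\<Sum>i\<in>UNIV. y i)) / \<epsilon>"
    by (simp add: sum.distrib sum_subtractf sum_divide_distrib[symmetric])
  also have "\<dots> = (\<Sum>i\<in>UNIV. y i / x i) - real CARD('k)" using s1 by simp
  also have "\<dots> \<ge> 1 - real CARD('k)"
  proof -
    have "(\<Sum>i\<in>UNIV. y i) \<le> (\<Sum>i\<in>UNIV. y i / x i)"
    proof (intro sum_mono)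
      fix i
      show "y i \<le> y i / x i" using xpos[of i] x1[of i] ynn[of i]
        by (simp add: le_divide_eq mult_left_le)
    qed
    then show ?thesis using s1 by simp
  qed
  finally have g: "1 - real CARD('k) \<le> (\<Sum>i\<in>UNIV. grad_R_eps \<epsilon> x i * (x i - y i))" .
  have "lam * (1 - real CARD('k)) \<le> lam * (\<Sum>i\<in>UNIV. grad_R_eps \<epsilon> x i * (x i - y i))"
    using g assms(4) by (rule mult_left_mono)
  then show ?thesis unfolding split e by (simp add: algebra_simps)
qed

lemma quad_bound:
  fixes x :: "'k::finite \<Rightarrow> real"
  assumes "0 < \<epsilon>" "x \<in> simplex_eps \<epsilon>" "0 \<le> lam" "0 \<le> l" "l \<le> 1" "0 \<le> \<alpha>" "\<alpha> \<le> 1"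
  shows "(\<Sum>i\<in>UNIV. x i powr (2 - \<alpha>) * (loss_tilde lam \<epsilon> x a l i)^2)
         \<le> (lam / \<epsilon>)^2 + 2 * (lam / \<epsilon>) + x a powr (2 - \<alpha>) / (x a)^2"
proof -
  have xpos: "\<And>i. 0 < x i" using assms(1,2) by (rule simplex_pos)
  have x1: "\<And>i. x i \<le> 1" using assms(1,2) by (intro simplex_le1) auto
  have s1: "(\<Sum>i\<in>UNIV. x i) = 1" using assms(2) by (auto simp: simplex_eps_def)
  have pw: "\<And>i. x i powr (2 - \<alpha>) \<le> x i"
  proof -
    fix i
    have "x i powr (2 - \<alpha>) \<le> x i powr 1"
      using xpos[of i] x1[of i] assms(7) by (intro powr_mono') auto
    then show "x i powr (2 - \<alpha>) \<le> x i" using xpos[of i] by simp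
  qed
  define v where "v = (\<lambda>i. lam * grad_R_eps \<epsilon> x i)"
  have v0: "\<And>i. 0 \<le> v i" and v1: "\<And>i. v i \<le> lam / \<epsilon>"
    using grad_bounds[OF assms(1,2,3)] by (auto simp: v_def)
  have vsq: "\<And>i. (v i)^2 \<le> (lam / \<epsilon>)^2"
    using v0 v1 by (intro power_mono) auto
  have trm: "x i powr (2 - \<alpha>) * (loss_tilde lam \<epsilon> x a l i)^2
      \<le> x i * (lam / \<epsilon>)^2 + (if i = a then 2 * (lam / \<epsilon>) + x a powr (2 - \<alpha>) / (x a)^2 else 0)" for i
  proof (cases "i = a")
    case False
    then have "loss_tilde lam \<epsilon> x a l i = v i" by (simp add: loss_tilde_def loss_est_def v_def)
    then have "x i powr (2 - \<alpha>) * (loss_tilde lam \<epsilon> x a l i)^2 \<le> x i * (lam / \<epsilon>)^2"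
      using pw[of i] vsq[of i] xpos[of i] by (simp add: mult_mono)
    then show ?thesis using False by simp
  next
    case True
    have lt: "loss_tilde lam \<epsilon> x a l i = l / x a + v a" using True by (simp add: loss_tilde_def loss_est_def v_def)
    have xa: "0 < x a" "x a \<le> 1" using xpos x1 by auto
    define p where "p = x a powr (2 - \<alpha>)"
    have p0: "0 \<le> p" and p1: "p \<le> x a" using pw[of a] by (auto simp: p_def)
    have "(l / x a + v a)^2 = l^2 / (x a)^2 + 2 * (l / x a) * v a + (v a)^2"
      using xa by (simp add: power2_eq_square field_simps)
    then have "p * (l / x a + v a)^2 = p * l^2 / (x a)^2 + 2 * (p * (l / x a)) * v a + p * (v a)^2"
      by (simp add: algebra_simps)
    moreover have "p * l^2 / (x a)^2 \<le> p / (x a)^2"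
    proof -
      have "l^2 \<le> 1" using assms(4,5) by (simp add: power_le_one)
      then have "p * l^2 \<le> p" using p0 by (simp add: mult_left_le)
      then show ?thesis using xa by (simp add: divide_right_mono)
    qed
    moreover have "2 * (p * (l / x a)) * v a \<le> 2 * (lam / \<epsilon>)"
    proof -
      have "p * (l / x a) \<le> x a * (1 / x a)"
        using p0 p1 assms(4,5) xa by (intro mult_mono) (auto simp: divide_right_mono)
      then have "p * (l / x a) \<le> 1" using xa by simp
      moreover have "0 \<le> p * (l / x a)" using p0 assms(4) xa by simp
      ultimately have "p * (l / x a) * v a \<le> 1 * (lam / \<epsilon>)"
        using v0[of a] v1[of a] by (intro mult_mono) auto
      then show ?thesis by simp
    qed
    moreover have "p * (v a)^2 \<le> x a * (lam / \<epsilon>)^2"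
      using p1 vsq[of a] p0 by (intro mult_mono) auto
    ultimately show ?thesis using True lt by (simp add: p_def)
  qed
  have "(\<Sum>i\<in>UNIV. x i powr (2 - \<alpha>) * (loss_tilde lam \<epsilon> x a l i)^2)
     \<le> (\<Sum>i\<in>UNIV. x i * (lam / \<epsilon>)^2 + (if i = a then 2 * (lam / \<epsilon>) + x a powr (2 - \<alpha>) / (x a)^2 else 0))"
    by (intro sum_mono trm)
  also have "\<dots> = (lam / \<epsilon>)^2 + (2 * (lam / \<epsilon>) + x a powr (2 - \<alpha>) / (x a)^2)"
    by (simp add: sum.distrib sum_distrib_right[symmetric] s1)
  finally show ?thesis by simp
qed



lemma integral_le_helper:
  fixes f g :: "real \<Rightarrow> real"
  assumes "AE l in M. 0 \<le> f l" "AE l in M. f l \<le> g l" "integrable M g"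
  shows "integral\<^sup>L M f \<le> integral\<^sup>L M g"
proof (cases "integrable M f")
  case True
  then show ?thesis using assms by (intro integral_mono_AE) auto
next
  case False
  then have "integral\<^sup>L M f = 0" by (simp add: not_integrable_integral_eq)
  moreover have "0 \<le> integral\<^sup>L M g"
    using assms(1,2) by (intro integral_nonneg_AE) (auto elim: eventually_mono)
  ultimately show ?thesis by simp
qed

context
  fixes P :: "'k::finite \<Rightarrow> real measure" and \<alpha> \<eta> \<epsilon> lam :: real
  assumes Pprob: "\<And>a. prob_space (P a)" and Psets: "\<And>a. sets (P a) = sets borel"
    and Pae: "\<And>a. AE l in P a. 0 \<le> l \<and> l \<le> 1"
    and pars: "0 \<le> \<alpha>" "\<alpha> \<le> 1" "0 < \<epsilon>" "0 < \<eta>" "0 \<le> lam"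
begin

lemma integrable_id: "integrable (P a) (\<lambda>l. l)"
proof -
  interpret prob_space "P a" by (rule Pprob)
  have "(\<lambda>l. l) \<in> borel_measurable (P a)" by (subst measurable_cong_sets[OF Psets[of a] refl]) simp
  moreover have "AE l in P a. norm l \<le> 1" using Pae[of a] by (auto elim: eventually_mono)
  ultimately show ?thesis by (intro integrable_const_bound[where B=1]) auto
qed

lemma integral_affine: "integral\<^sup>L (P a) (\<lambda>l. C + l * D) = C + mean_loss P a * D"
proof -
  interpret prob_space "P a" by (rule Pprob)
  have i1: "integrable (P a) (\<lambda>l. C)" by simp
  have i2: "integrable (P a) (\<lambda>l. l * D)" by (intro integrable_mult_left integrable_id)
  have "integral\<^sup>L (P a) (\<lambda>l. C + l * D) = integral\<^sup>L (P a) (\<lambda>l. C) + integral\<^sup>L (P a) (\<lambda>l. l * D)"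
    by (rule Bochner_Integration.integral_add[OF i1 i2])
  then show ?thesis by (simp add: mean_loss_def prob_space)
qed

lemma integrable_affine: "integrable (P a) (\<lambda>l. C + l * D)"
proof -
  interpret prob_space "P a" by (rule Pprob)
  have i1: "integrable (P a) (\<lambda>l. C)" by simp
  have i2: "integrable (P a) (\<lambda>l. l * D)" by (intro integrable_mult_left integrable_id)
  show ?thesis by (rule Bochner_Integration.integrable_add[OF i1 i2])
qed

lemma mu_bounds: "0 \<le> mean_loss P a" "mean_loss P a \<le> 1"
proof -
  interpret prob_space "P a" by (rule Pprob)
  show "0 \<le> mean_loss P a" unfolding mean_loss_def
    using Pae[of a] by (intro integral_nonneg_AE) (auto elim: eventually_mono)
  have "mean_loss P a \<le> integral\<^sup>L (P a) (\<lambda>l. 1)" unfolding mean_loss_def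
    using Pae[of a] by (intro integral_mono_AE integrable_id) (auto elim: eventually_mono)
  then show "mean_loss P a \<le> 1" by (simp add: prob_space)
qed

lemma next_in:
  assumes "x \<in> simplex_eps \<epsilon>" "0 \<le> l"
  shows "rexp3_next \<alpha> \<eta> \<epsilon> lam x a l \<in> simplex_eps \<epsilon>"
  unfolding rexp3_next_def
  by (rule omd_step(1)[OF pars(1,2,3) assms(1) assms(1)])
     (use lt_nonneg[OF pars(3) assms(1) pars(5) assms(2)] pars in auto)

lemma E_nonneg:
  "x \<in> simplex_eps \<epsilon> \<Longrightarrow> 0 \<le> rexp3_expected_cum P \<alpha> \<eta> \<epsilon> lam n x"
proof (induction n arbitrary: x)
  case 0 then show ?case by simp
next
  case (Suc n)
  have xnn: "\<And>i. 0 \<le> x i" using simplex_pos[OF pars(3) Suc.prems] less_imp_le by blast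
  have "0 \<le> (\<Sum>i\<in>UNIV. mean_loss P i * x i)"
    using mu_bounds xnn by (intro sum_nonneg) simp
  moreover have "0 \<le> (\<Sum>a\<in>UNIV. x a * (\<integral>l. rexp3_expected_cum P \<alpha> \<eta> \<epsilon> lam n (rexp3_next \<alpha> \<eta> \<epsilon> lam x a l) \<partial>P a))"
  proof (intro sum_nonneg mult_nonneg_nonneg xnn integral_nonneg_AE)
    fix a
    show "AE l in P a. 0 \<le> rexp3_expected_cum P \<alpha> \<eta> \<epsilon> lam n (rexp3_next \<alpha> \<eta> \<epsilon> lam x a l)"
      using Pae[of a] by (auto elim!: eventually_mono intro: Suc.IH next_in Suc.prems)
  qed
  ultimately show ?case by simp
qed

lemma E_trivial:
  assumes "x \<in> simplex_eps \<epsilon>" "\<And>i. mean_loss P i \<le> m"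
  shows "rexp3_expected_cum P \<alpha> \<eta> \<epsilon> lam n x \<le> real n * m"
  using assms(1)
proof (induction n arbitrary: x)
  case 0 then show ?case by simp
next
  case (Suc n)
  have xnn: "\<And>i. 0 \<le> x i" using simplex_pos[OF pars(3) Suc.prems] less_imp_le by blast
  have s1: "(\<Sum>i\<in>UNIV. x i) = 1" using Suc.prems by (simp add: simplex_eps_def)
  have "(\<Sum>i\<in>UNIV. mean_loss P i * x i) \<le> (\<Sum>i\<in>UNIV. m * x i)"
    using assms(2) xnn by (intro sum_mono mult_right_mono) auto
  also have "\<dots> = m" using s1 by (simp add: sum_distrib_left[symmetric])
  finally have 1: "(\<Sum>i\<in>UNIV. mean_loss P i * x i) \<le> m" .
  have "(\<Sum>a\<in>UNIV. x a * (\<integral>l. rexp3_expected_cum P \<alpha> \<eta> \<epsilon> lam n (rexp3_next \<alpha> \<eta> \<epsilon> lam x a l) \<partial>P a))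
      \<le> (\<Sum>a\<in>UNIV. x a * (\<integral>l. real n * m \<partial>P a))"
  proof (intro sum_mono mult_left_mono xnn integral_le_helper)
    fix a
    show "AE l in P a. 0 \<le> rexp3_expected_cum P \<alpha> \<eta> \<epsilon> lam n (rexp3_next \<alpha> \<eta> \<epsilon> lam x a l)"
      using Pae[of a] by (auto elim!: eventually_mono intro: E_nonneg next_in Suc.prems)
    show "AE l in P a. rexp3_expected_cum P \<alpha> \<eta> \<epsilon> lam n (rexp3_next \<alpha> \<eta> \<epsilon> lam x a l) \<le> real n * m"
      using Pae[of a] by (auto elim!: eventually_mono intro: Suc.IH next_in Suc.prems)
    interpret prob_space "P a" by (rule Pprob)
    show "integrable (P a) (\<lambda>l. real n * m)" by simp
  qed
  also have "\<dots> = real n * m"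
  proof -
    have pa: "\<And>a. (\<integral>l. real n * m \<partial>P a) = real n * m"
      using Pprob prob_space.prob_space by (simp add: prob_space.prob_space)
    have "(\<Sum>a\<in>UNIV. x a * (\<integral>l. real n * m \<partial>P a)) = (\<Sum>a\<in>UNIV. x a) * (real n * m)"
      unfolding pa by (simp add: sum_distrib_right)
    then show ?thesis using s1 by simp
  qed
  finally show ?case using 1 by (simp add: algebra_simps)
qed


lemma bregman_nonneg:
  assumes "x \<in> simplex_eps \<epsilon>" "y \<in> simplex_eps \<epsilon>"
  shows "0 \<le> bregman \<alpha> y x"
proof -
  have xpos: "\<And>i. 0 < x i" using pars(3) assms(1) by (rule simplex_pos)
  have ypos: "\<And>i. 0 < y i" using pars(3) assms(2) by (rule simplex_pos)
  have bx: "bregman \<alpha> y x = (\<Sum>i\<in>UNIV. ds \<alpha> (y i) (x i))"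
    by (rule bregman_eq[OF pars(1,2)]) (rule xpos)
  show ?thesis unfolding bx using ds_nonneg[OF pars(1,2)] xpos ypos by (simp add: sum_nonneg)
qed

lemma E_upper:
  fixes x y :: "'k \<Rightarrow> real"
  assumes "x \<in> simplex_eps \<epsilon>" "y \<in> simplex_eps \<epsilon>"
  shows "rexp3_expected_cum P \<alpha> \<eta> \<epsilon> lam n x \<le> real n * ((\<Sum>i\<in>UNIV. mean_loss P i * y i)
     + (lam * (real CARD('k) - 1) + \<eta> * ((lam / \<epsilon>)^2 + 2 * (lam / \<epsilon>) + real CARD('k))))
     + bregman \<alpha> y x / \<eta>"
  using assms(1)
proof (induction n arbitrary: x)
  case 0
  then show ?case using bregman_nonneg[OF 0 assms(2)] pars(4) by simp
next
  case (Suc n)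
  define K where "K = real CARD('k)"
  define muy where "muy = (\<Sum>i\<in>UNIV. mean_loss P i * y i)"
  define c where "c = lam * (K - 1) + \<eta> * ((lam / \<epsilon>)^2 + 2 * (lam / \<epsilon>) + K)"
  define B0 where "B0 = real n * (muy + c) + bregman \<alpha> y x / \<eta> + lam * (K - 1) + \<eta> * ((lam / \<epsilon>)^2 + 2 * (lam / \<epsilon>))"
  define q where "q = (\<lambda>a. x a powr (2 - \<alpha>) / (x a)^2)"
  define h where "h = (\<lambda>a l. (B0 + \<eta> * q a) + l * (- (x a - y a) / x a))"
  have xpos: "\<And>i. 0 < x i" using pars(3) Suc.prems by (rule simplex_pos)
  have x1: "\<And>i. x i \<le> 1" using pars(3) Suc.prems by (intro simplex_le1) auto
  have s1: "(\<Sum>i\<in>UNIV. x i) = 1" using Suc.prems by (simp add: simplex_eps_def)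
  have IH': "\<And>w. w \<in> simplex_eps \<epsilon> \<Longrightarrow> rexp3_expected_cum P \<alpha> \<eta> \<epsilon> lam n w \<le> real n * (muy + c) + bregman \<alpha> y w / \<eta>"
    using Suc.IH unfolding muy_def c_def K_def by blast
  have pw: "rexp3_expected_cum P \<alpha> \<eta> \<epsilon> lam n (rexp3_next \<alpha> \<eta> \<epsilon> lam x a l) \<le> h a l"
    if l: "0 \<le> l" "l \<le> 1" for a l
  proof -
    define lt where "lt = loss_tilde lam \<epsilon> x a l"
    have ltnn: "\<And>i. 0 \<le> lt i" unfolding lt_def using lt_nonneg[OF pars(3) Suc.prems pars(5) l(1)] .
    have nx: "rexp3_next \<alpha> \<eta> \<epsilon> lam x a l = proj \<alpha> \<epsilon> (mirror_step \<alpha> \<eta> lt x)"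
      by (simp add: rexp3_next_def lt_def)
    have step: "bregman \<alpha> y (rexp3_next \<alpha> \<eta> \<epsilon> lam x a l) \<le> bregman \<alpha> y x
       - \<eta> * (\<Sum>i\<in>UNIV. lt i * (x i - y i)) + \<eta>^2 * (\<Sum>i\<in>UNIV. x i powr (2 - \<alpha>) * (lt i)^2)"
      unfolding nx by (rule omd_step(2)[OF pars(1,2,3) Suc.prems assms(2) ltnn pars(4)])
    have lin: "- (\<Sum>i\<in>UNIV. lt i * (x i - y i)) \<le> - (l / x a * (x a - y a)) + lam * (K - 1)"
      unfolding lt_def K_def by (rule lin_bound[OF pars(3) Suc.prems assms(2) pars(5)])
    have quad: "(\<Sum>i\<in>UNIV. x i powr (2 - \<alpha>) * (lt i)^2) \<le> (lam / \<epsilon>)^2 + 2 * (lam / \<epsilon>) + q a"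
      unfolding lt_def q_def by (rule quad_bound[OF pars(3) Suc.prems pars(5) l pars(1,2)])
    have "bregman \<alpha> y (rexp3_next \<alpha> \<eta> \<epsilon> lam x a l) / \<eta> \<le> bregman \<alpha> y x / \<eta>
       - (\<Sum>i\<in>UNIV. lt i * (x i - y i)) + \<eta> * (\<Sum>i\<in>UNIV. x i powr (2 - \<alpha>) * (lt i)^2)"
    proof -
      have "bregman \<alpha> y (rexp3_next \<alpha> \<eta> \<epsilon> lam x a l) / \<eta> \<le> (bregman \<alpha> y x
       - \<eta> * (\<Sum>i\<in>UNIV. lt i * (x i - y i)) + \<eta>^2 * (\<Sum>i\<in>UNIV. x i powr (2 - \<alpha>) * (lt i)^2)) / \<eta>"
        using step pars(4) by (simp add: divide_right_mono)
      also have "\<dots> = bregman \<alpha> y x / \<eta>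
       - (\<Sum>i\<in>UNIV. lt i * (x i - y i)) + \<eta> * (\<Sum>i\<in>UNIV. x i powr (2 - \<alpha>) * (lt i)^2)"
        using pars(4) by (simp add: field_simps power2_eq_square)
      finally show ?thesis .
    qed
    moreover have "\<eta> * (\<Sum>i\<in>UNIV. x i powr (2 - \<alpha>) * (lt i)^2) \<le> \<eta> * ((lam / \<epsilon>)^2 + 2 * (lam / \<epsilon>) + q a)"
      using quad pars(4) by (intro mult_left_mono) auto
    moreover have "rexp3_expected_cum P \<alpha> \<eta> \<epsilon> lam n (rexp3_next \<alpha> \<eta> \<epsilon> lam x a l)
        \<le> real n * (muy + c) + bregman \<alpha> y (rexp3_next \<alpha> \<eta> \<epsilon> lam x a l) / \<eta>"
      by (rule IH'[OF next_in[OF Suc.prems l(1)]])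
    moreover have "h a l = B0 + \<eta> * q a - l / x a * (x a - y a)"
      unfolding h_def using xpos[of a] by (simp add: field_simps)
    ultimately show ?thesis using lin unfolding B0_def by (simp add: algebra_simps)
  qed
  have int_le: "(\<integral>l. rexp3_expected_cum P \<alpha> \<eta> \<epsilon> lam n (rexp3_next \<alpha> \<eta> \<epsilon> lam x a l) \<partial>P a)
      \<le> (\<integral>l. h a l \<partial>P a)" for a
  proof (rule integral_le_helper)
    show "AE l in P a. 0 \<le> rexp3_expected_cum P \<alpha> \<eta> \<epsilon> lam n (rexp3_next \<alpha> \<eta> \<epsilon> lam x a l)"
      using Pae[of a] by (auto elim!: eventually_mono intro: E_nonneg next_in Suc.prems)
    show "AE l in P a. rexp3_expected_cum P \<alpha> \<eta> \<epsilon> lam n (rexp3_next \<alpha> \<eta> \<epsilon> lam x a l) \<le> h a l"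
      using Pae[of a] by (rule eventually_mono) (use pw in blast)
    show "integrable (P a) (h a)" unfolding h_def by (rule integrable_affine)
  qed
  have hint: "x a * (\<integral>l. h a l \<partial>P a) = x a * B0 + \<eta> * (x a * q a) - mean_loss P a * (x a - y a)" for a
  proof -
    have "(\<integral>l. h a l \<partial>P a) = (B0 + \<eta> * q a) + mean_loss P a * (- (x a - y a) / x a)"
      unfolding h_def by (rule integral_affine)
    then show ?thesis using xpos[of a] by (simp add: field_simps)
  qed
  have xq: "x a * q a \<le> 1" for a
  proof -
    have "x a powr (2 - \<alpha>) \<le> x a powr 1"
      using xpos[of a] x1[of a] pars(2) by (intro powr_mono') auto
    then have "x a powr (2 - \<alpha>) \<le> x a" using xpos[of a] by simp
    moreover have "x a * q a = x a powr (2 - \<alpha>) / x a" using xpos[of a]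
      by (simp add: q_def power2_eq_square)
    ultimately show ?thesis using xpos[of a] by (simp add: divide_le_eq)
  qed
  have "(\<Sum>a\<in>UNIV. x a * (\<integral>l. rexp3_expected_cum P \<alpha> \<eta> \<epsilon> lam n (rexp3_next \<alpha> \<eta> \<epsilon> lam x a l) \<partial>P a))
      \<le> (\<Sum>a\<in>UNIV. x a * (\<integral>l. h a l \<partial>P a))"
    using xpos int_le by (intro sum_mono mult_left_mono) (auto simp: less_imp_le)
  also have "\<dots> = (\<Sum>a\<in>UNIV. x a * B0 + \<eta> * (x a * q a) - mean_loss P a * (x a - y a))"
    using hint by simp
  also have "\<dots> = B0 + \<eta> * (\<Sum>a\<in>UNIV. x a * q a) - ((\<Sum>a\<in>UNIV. mean_loss P a * x a) - muy)"
    unfolding muy_def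
    by (simp add: sum.distrib sum_subtractf sum_distrib_left[symmetric] sum_distrib_right[symmetric] s1 right_diff_distrib)
  also have "\<dots> \<le> B0 + \<eta> * K - ((\<Sum>a\<in>UNIV. mean_loss P a * x a) - muy)"
  proof -
    have "(\<Sum>a\<in>UNIV. x a * q a) \<le> (\<Sum>a\<in>(UNIV::'k set). (1::real))" by (rule sum_mono) (rule xq)
    then have "(\<Sum>a\<in>UNIV. x a * q a) \<le> K" by (simp add: K_def)
    then show ?thesis using pars(4) by simp
  qed
  finally have "rexp3_expected_cum P \<alpha> \<eta> \<epsilon> lam (Suc n) x \<le> B0 + \<eta> * K + muy" by simp
  also have "\<dots> = real (Suc n) * (muy + c) + bregman \<alpha> y x / \<eta>"
    unfolding B0_def c_def by (simp add: algebra_simps add_divide_distrib)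
  finally show ?case unfolding muy_def c_def K_def .
qed

end



lemma breg_unif:
  fixes y :: "'k::finite \<Rightarrow> real"
  assumes "0 \<le> \<alpha>" "\<alpha> \<le> 1" "(\<Sum>i\<in>UNIV. y i) = 1"
  shows "bregman \<alpha> y (\<lambda>_. 1 / real CARD('k)) = (\<Sum>i\<in>UNIV. phi_scalar \<alpha> (y i) - phi_scalar \<alpha> (1 / real CARD('k)))"
proof -
  define t where "t = 1 / real CARD('k)"
  have t0: "0 < t" by (simp add: t_def)
  have "bregman \<alpha> y (\<lambda>_. t) = (\<Sum>i\<in>UNIV. ds \<alpha> (y i) t)"
    by (rule bregman_eq[OF assms(1,2)]) (rule t0)
  also have "\<dots> = (\<Sum>i\<in>UNIV. phi_scalar \<alpha> (y i) - phi_scalar \<alpha> t) - gs \<alpha> t * (\<Sum>i\<in>UNIV. y i - t)"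
    by (simp add: ds_def sum_subtractf sum_distrib_left[symmetric])
  also have "(\<Sum>i\<in>UNIV. y i - t) = 0" using assms(3) by (simp add: sum_subtractf t_def)
  finally show ?thesis by (simp add: t_def)
qed

lemma phi_diff:
  assumes "0 < \<alpha>" "\<alpha> < 1"
  shows "phi_scalar \<alpha> s - phi_scalar \<alpha> t = (t powr \<alpha> - s powr \<alpha>) / (\<alpha> * (1 - \<alpha>)) + (s - t) / (1 - \<alpha>)"
proof -
  have p: "\<And>s. phi_scalar \<alpha> s = - ((s powr \<alpha> - \<alpha> * s - (1 - \<alpha>)) / (\<alpha> * (1 - \<alpha>)))"
    using assms by (simp add: phi_scalar_def)
  have nz: "\<alpha> \<noteq> 0" "1 - \<alpha> \<noteq> 0" "\<alpha> * (1 - \<alpha>) \<noteq> 0" using assms by auto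
  have l1: "\<And>A B d :: real. - (A / d) - - (B / d) = (B - A) / d" by (simp add: diff_divide_distrib)
  have l2: "\<And>X Y a b :: real. a \<noteq> 0 \<Longrightarrow> (X + a * Y) / (a * b) = X / (a * b) + Y / b"
    by (simp add: add_divide_distrib)
  have "phi_scalar \<alpha> s - phi_scalar \<alpha> t
     = ((t powr \<alpha> - \<alpha> * t - (1 - \<alpha>)) - (s powr \<alpha> - \<alpha> * s - (1 - \<alpha>))) / (\<alpha> * (1 - \<alpha>))"
    unfolding p by (rule l1)
  also have "(t powr \<alpha> - \<alpha> * t - (1 - \<alpha>)) - (s powr \<alpha> - \<alpha> * s - (1 - \<alpha>)) = (t powr \<alpha> - s powr \<alpha>) + \<alpha> * (s - t)"
    by (simp add: algebra_simps)
  also have "((t powr \<alpha> - s powr \<alpha>) + \<alpha> * (s - t)) / (\<alpha> * (1 - \<alpha>)) = (t powr \<alpha> - s powr \<alpha>) / (\<alpha> * (1 - \<alpha>)) + (s - t) / (1 - \<alpha>)"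
    by (rule l2) (use nz in simp)
  finally show ?thesis .
qed

lemma breg_unif_small:
  fixes y :: "'k::finite \<Rightarrow> real"
  assumes "0 \<le> \<alpha>" "\<alpha> < 1/3" "0 < \<epsilon>" "y \<in> simplex_eps \<epsilon>"
  shows "bregman \<alpha> y (\<lambda>_. 1 / real CARD('k)) \<le> 3/2 * real CARD('k) * ln (1 / (real CARD('k) * \<epsilon>))"
proof -
  define K where "K = real CARD('k)"
  define t where "t = 1 / K"
  define L where "L = ln (t / \<epsilon>)"
  have K0: "0 < K" by (simp add: K_def)
  have t0: "0 < t" "t \<le> 1" using K0 by (auto simp: t_def K_def)
  have ypos: "\<And>i. 0 < y i" using assms(3,4) by (rule simplex_pos)
  have yle: "\<And>i. y i \<le> 1" using assms(3,4) by (intro simplex_le1) auto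
  have yeps: "\<And>i. \<epsilon> \<le> y i" using assms(4) by (simp add: simplex_eps_def)
  have s1: "(\<Sum>i\<in>UNIV. y i) = 1" using assms(4) by (simp add: simplex_eps_def)
  have Lt: "L = ln (1 / (K * \<epsilon>))" by (simp add: L_def t_def)
  have lnyL: "ln t - ln (y i) \<le> L" for i
    using yeps[of i] assms(3) t0 by (simp add: L_def ln_div)
  have L0: "0 \<le> L"
  proof -
    have "K * \<epsilon> = (\<Sum>i\<in>(UNIV::'k set). \<epsilon>)" by (simp add: K_def)
    also have "\<dots> \<le> (\<Sum>i\<in>UNIV. y i)" by (intro sum_mono yeps)
    finally have "K * \<epsilon> \<le> 1" using s1 by simp
    then have "\<epsilon> \<le> t" using K0 by (simp add: t_def field_simps)
    then show ?thesis using assms(3) by (simp add: L_def)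
  qed
  have D: "bregman \<alpha> y (\<lambda>_. t) = (\<Sum>i\<in>UNIV. phi_scalar \<alpha> (y i) - phi_scalar \<alpha> t)"
    unfolding t_def K_def by (rule breg_unif[OF assms(1) _ s1]) (use assms in auto)
  have "(\<Sum>i\<in>UNIV. phi_scalar \<alpha> (y i) - phi_scalar \<alpha> t) \<le> (\<Sum>i\<in>(UNIV::'k set). 3/2 * L)"
  proof (cases "\<alpha> = 0")
    case True
    have "(\<Sum>i\<in>UNIV. phi_scalar \<alpha> (y i) - phi_scalar \<alpha> t) = (\<Sum>i\<in>UNIV. (ln t - ln (y i)) + (y i - t))"
      using True by (intro sum.cong refl) (simp add: phi_scalar_def)
    also have "\<dots> = (\<Sum>i\<in>UNIV. ln t - ln (y i))"
      using s1 by (simp add: sum.distrib sum_subtractf t_def K_def)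
    also have "\<dots> \<le> (\<Sum>i\<in>(UNIV::'k set). 3/2 * L)"
    proof (intro sum_mono)
      fix i
      show "ln t - ln (y i) \<le> 3/2 * L" using lnyL[of i] L0 by linarith
    qed
    finally show ?thesis .
  next
    case False
    then have a0: "0 < \<alpha>" "\<alpha> < 1" "\<alpha> \<noteq> 1" "\<alpha> \<noteq> 0" using assms by auto
    have "(\<Sum>i\<in>UNIV. phi_scalar \<alpha> (y i) - phi_scalar \<alpha> t)
        = (\<Sum>i\<in>UNIV. (t powr \<alpha> - y i powr \<alpha>) / (\<alpha> * (1 - \<alpha>)) + (y i - t) / (1 - \<alpha>))"
      using a0 by (intro sum.cong refl phi_diff) auto
    also have "\<dots> = (\<Sum>i\<in>UNIV. (t powr \<alpha> - y i powr \<alpha>) / (\<alpha> * (1 - \<alpha>)))"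
    proof -
      have "(\<Sum>i\<in>UNIV. (y i - t) / (1 - \<alpha>)) = 0"
        using s1 by (simp add: sum_divide_distrib[symmetric] sum_subtractf t_def K_def)
      then show ?thesis by (simp add: sum.distrib)
    qed
    also have "\<dots> \<le> (\<Sum>i\<in>(UNIV::'k set). 3/2 * L)"
    proof (intro sum_mono)
      fix i
      have tp: "t powr \<alpha> - y i powr \<alpha> \<le> \<alpha> * L"
      proof (cases "t \<le> y i")
        case True
        then have "t powr \<alpha> \<le> y i powr \<alpha>" using t0 a0 by (intro powr_mono2) auto
        moreover have "0 \<le> \<alpha> * L" using L0 a0 by simp
        ultimately show ?thesis by linarith
      next
        case False
        have e1: "t powr \<alpha> = exp (\<alpha> * ln t)" using t0 by (simp add: powr_def)
        have e2: "y i powr \<alpha> = exp (\<alpha> * ln t) * exp (- (\<alpha> * (ln t - ln (y i))))"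
          unfolding mult_exp_exp using ypos[of i] by (simp add: powr_def algebra_simps)
        define w where "w = \<alpha> * (ln t - ln (y i))"
        have w1: "1 - w \<le> exp (- w)"
          using exp_ge_add_one_self[of "- w"] by simp
        have "exp (\<alpha> * ln t) * (1 - w) \<le> exp (\<alpha> * ln t) * exp (- w)"
          using mult_left_mono[OF w1, of "exp (\<alpha> * ln t)"] by simp
        then have "exp (\<alpha> * ln t) - exp (\<alpha> * ln t) * exp (- w) \<le> exp (\<alpha> * ln t) * w"
          by (simp add: right_diff_distrib)
        then have "t powr \<alpha> - y i powr \<alpha> \<le> exp (\<alpha> * ln t) * (\<alpha> * (ln t - ln (y i)))"
          unfolding e1 e2 w_def .
        also have "\<dots> \<le> 1 * (\<alpha> * L)"
        proof (rule mult_mono)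
          show "exp (\<alpha> * ln t) \<le> 1" using t0 a0 by (simp add: mult_nonneg_nonpos)
          show "\<alpha> * (ln t - ln (y i)) \<le> \<alpha> * L" using lnyL[of i] a0 by (simp add: mult_left_mono)
          have "ln (y i) \<le> ln t" using False ypos[of i] by simp
          then show "0 \<le> \<alpha> * (ln t - ln (y i))" using a0 by simp
        qed simp
        finally show ?thesis by simp
      qed
      have "(t powr \<alpha> - y i powr \<alpha>) / (\<alpha> * (1 - \<alpha>)) \<le> \<alpha> * L / (\<alpha> * (1 - \<alpha>))"
        using tp a0 by (intro divide_right_mono) auto
      also have "\<dots> = L / (1 - \<alpha>)" using a0 by simp
      also have "\<dots> \<le> 3/2 * L"
      proof -
        have "L * 1 \<le> L * (3/2 * (1 - \<alpha>))" by (intro mult_left_mono) (use L0 assms(2) in auto)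
        then show ?thesis using a0 by (simp add: divide_le_eq algebra_simps)
      qed
      finally show "(t powr \<alpha> - y i powr \<alpha>) / (\<alpha> * (1 - \<alpha>)) \<le> 3/2 * L" .
    qed
    finally show ?thesis .
  qed
  also have "\<dots> = 3/2 * K * L" by (simp add: K_def)
  finally show ?thesis using D unfolding Lt t_def K_def by simp
qed

lemma breg_unif_large:
  fixes y :: "'k::finite \<Rightarrow> real"
  assumes "1/3 \<le> \<alpha>" "\<alpha> \<le> 1" "0 < \<epsilon>" "y \<in> simplex_eps \<epsilon>"
  shows "bregman \<alpha> y (\<lambda>_. 1 / real CARD('k)) \<le> 3 * (real CARD('k) - 1)"
proof -
  define K where "K = real CARD('k)"
  define t where "t = 1 / K"
  have K1: "1 \<le> K" by (simp add: K_def)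
  have t0: "0 < t" "t \<le> 1" using K1 by (auto simp: t_def K_def)
  have ypos: "\<And>i. 0 < y i" using assms(3,4) by (rule simplex_pos)
  have yle: "\<And>i. y i \<le> 1" using assms(3,4) by (intro simplex_le1) auto
  have s1: "(\<Sum>i\<in>UNIV. y i) = 1" using assms(4) by (simp add: simplex_eps_def)
  have D: "bregman \<alpha> y (\<lambda>_. t) = (\<Sum>i\<in>UNIV. phi_scalar \<alpha> (y i) - phi_scalar \<alpha> t)"
    unfolding t_def K_def by (rule breg_unif[OF _ assms(2) s1]) (use assms in auto)
  have "(\<Sum>i\<in>UNIV. phi_scalar \<alpha> (y i) - phi_scalar \<alpha> t) \<le> 3 * (K - 1)"
  proof (cases "\<alpha> = 1")
    case True
    have "(\<Sum>i\<in>UNIV. phi_scalar \<alpha> (y i) - phi_scalar \<alpha> t) = (\<Sum>i\<in>UNIV. y i * ln (y i) + (t - y i) - t * ln t)"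
      using True by (intro sum.cong refl) (simp add: phi_scalar_def algebra_simps)
    also have "\<dots> = (\<Sum>i\<in>UNIV. y i * ln (y i)) - K * (t * ln t)"
      using s1 by (simp add: sum.distrib sum_subtractf t_def K_def)
    also have "\<dots> \<le> 0 + ln K"
    proof -
      have "(\<Sum>i\<in>UNIV. y i * ln (y i)) \<le> 0"
        using ypos yle by (intro sum_nonpos mult_nonneg_nonpos) (auto simp: less_imp_le)
      moreover have "K * (t * ln t) = - ln K" using K1 by (simp add: t_def ln_div)
      ultimately show ?thesis by simp
    qed
    also have "\<dots> \<le> 3 * (K - 1)" using ln_le_minus_one[of K] K1 by simp
    finally show ?thesis .
  next
    case False
    then have a0: "0 < \<alpha>" "\<alpha> < 1" "\<alpha> \<noteq> 1" "\<alpha> \<noteq> 0" using assms by auto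
    have "(\<Sum>i\<in>UNIV. phi_scalar \<alpha> (y i) - phi_scalar \<alpha> t)
        = (\<Sum>i\<in>UNIV. (t powr \<alpha> - y i powr \<alpha>) / (\<alpha> * (1 - \<alpha>)) + (y i - t) / (1 - \<alpha>))"
      using a0 by (intro sum.cong refl phi_diff) auto
    also have "\<dots> = (\<Sum>i\<in>UNIV. (t powr \<alpha> - y i powr \<alpha>)) / (\<alpha> * (1 - \<alpha>))"
    proof -
      have "(\<Sum>i\<in>UNIV. (y i - t) / (1 - \<alpha>)) = 0"
        using s1 by (simp add: sum_divide_distrib[symmetric] sum_subtractf t_def K_def)
      then show ?thesis by (simp add: sum.distrib sum_divide_distrib)
    qed
    also have "\<dots> \<le> (1 - \<alpha>) * (K - 1) / (\<alpha> * (1 - \<alpha>))"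
    proof (intro divide_right_mono)
      have "(\<Sum>i\<in>UNIV. y i) \<le> (\<Sum>i\<in>UNIV. y i powr \<alpha>)"
      proof (intro sum_mono)
        fix i
        have "y i powr 1 \<le> y i powr \<alpha>" using ypos[of i] yle[of i] a0 by (intro powr_mono') auto
        then show "y i \<le> y i powr \<alpha>" using ypos[of i] by simp
      qed
      moreover have "K * t powr \<alpha> \<le> 1 + (1 - \<alpha>) * (K - 1)"
      proof -
        have "K powr (1 - \<alpha>) * 1 powr \<alpha> \<le> (1 - \<alpha>) * K + \<alpha> * 1"
          using a0 K1 by (intro Youngs_inequality_0) auto
        moreover have "K * t powr \<alpha> = K powr (1 - \<alpha>)"
          using K1 by (simp add: t_def powr_divide powr_diff)
        ultimately show ?thesis by (simp add: algebra_simps)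
      qed
      ultimately show "(\<Sum>i\<in>UNIV. (t powr \<alpha> - y i powr \<alpha>)) \<le> (1 - \<alpha>) * (K - 1)"
        using s1 by (simp add: sum_subtractf K_def)
    qed (use a0 in simp)
    also have "\<dots> = (K - 1) / \<alpha>" using a0 by simp
    also have "\<dots> \<le> 3 * (K - 1)"
    proof -
      have "(K - 1) * 1 \<le> (K - 1) * (3 * \<alpha>)" using K1 assms(1) by (intro mult_left_mono) auto
      then have "K - 1 \<le> 3 * (K - 1) * \<alpha>" by (simp add: algebra_simps)
      then show ?thesis using a0 by (simp add: divide_le_eq)
    qed
    finally show ?thesis .
  qed
  then show ?thesis using D unfolding t_def K_def by simp
qed



lemma ln2_ge: "2/3 \<le> ln (2::real)"
proof -
  have "exp (1/12 :: real) \<le> 1 + 1/12 + (1/12)^2" by (rule exp_bound) auto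
  then have "exp (1/12 :: real) ^ 8 \<le> (1 + 1/12 + (1/12)^2) ^ 8"
    by (intro power_mono) auto
  also have "\<dots> \<le> (2::real)" by (simp add: power_divide)
  finally have h: "exp (1/12 :: real) ^ 8 \<le> 2" .
  have "exp (2/3 :: real) = exp (of_nat 8 * (1/12))" by simp
  also have "\<dots> = exp (1/12) ^ 8" by (rule exp_of_nat_mult)
  finally have "exp (2/3 :: real) \<le> 2" using h by simp
  then show ?thesis using ln_le_cancel_iff[of "exp (2/3)" 2] by simp
qed

lemma card1_simplex:
  assumes "CARD('k::finite) = 1" "x \<in> simplex_eps \<epsilon>"
  shows "x = (\<lambda>_::'k. 1)"
proof -
  obtain i0 :: 'k where U: "UNIV = {i0}" using assms(1) card_1_singletonE by blast
  have "(\<Sum>j\<in>UNIV. x j) = x i0" by (simp add: U)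
  then have "x i0 = 1" using assms(2) by (simp add: simplex_eps_def)
  then show ?thesis using U by (auto simp: fun_eq_iff)
qed

lemma card1_proj:
  fixes z :: "'k::finite \<Rightarrow> real"
  assumes "CARD('k) = 1" "(y::'k \<Rightarrow> real) \<in> simplex_eps \<epsilon>"
  shows "proj \<alpha> \<epsilon> z \<in> simplex_eps \<epsilon>"
proof -
  have S: "simplex_eps \<epsilon> = {y}" using card1_simplex[OF assms(1)] assms(2) by blast
  have "is_arg_min (\<lambda>x::'k \<Rightarrow> real. bregman \<alpha> x z) (\<lambda>x. x \<in> simplex_eps \<epsilon>) y"
    unfolding is_arg_min_def S by auto
  then have "is_arg_min (\<lambda>x. bregman \<alpha> x z) (\<lambda>x. x \<in> simplex_eps \<epsilon>) (proj \<alpha> \<epsilon> z)"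
    unfolding proj_def arg_min_def by (rule someI[of _ y])
  then show ?thesis by (simp add: is_arg_min_def)
qed

lemma card1_E:
  fixes P :: "'k::finite \<Rightarrow> real measure"
  assumes "CARD('k) = 1" "\<And>a. prob_space (P a)" "x \<in> simplex_eps \<epsilon>"
  shows "rexp3_expected_cum P \<alpha> \<eta> \<epsilon> lam n x = real n * (\<Sum>i\<in>UNIV. mean_loss P i)"
  using assms(3)
proof (induction n arbitrary: x)
  case 0 then show ?case by simp
next
  case (Suc n)
  have x1: "x = (\<lambda>_. 1)" by (rule card1_simplex[OF assms(1) Suc.prems])
  define M where "M = (\<Sum>i\<in>UNIV. mean_loss P i)"
  have eqn: "\<And>a l. rexp3_expected_cum P \<alpha> \<eta> \<epsilon> lam n (rexp3_next \<alpha> \<eta> \<epsilon> lam x a l) = real n * M"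
    unfolding rexp3_next_def M_def by (rule Suc.IH[OF card1_proj[OF assms(1) Suc.prems]])
  have ci: "(\<integral>l. c \<partial>P a) = c" for a and c :: real
  proof -
    interpret prob_space "P a" by (rule assms(2))
    show ?thesis by (simp add: prob_space)
  qed
  have I: "(\<integral>l. rexp3_expected_cum P \<alpha> \<eta> \<epsilon> lam n (rexp3_next \<alpha> \<eta> \<epsilon> lam x a l) \<partial>P a) = real n * M" for a
    by (simp only: eqn ci)
  have "rexp3_expected_cum P \<alpha> \<eta> \<epsilon> lam (Suc n) x = (\<Sum>i\<in>UNIV. mean_loss P i * x i) + (\<Sum>a\<in>UNIV. x a * (real n * M))"
    by (simp only: rexp3_expected_cum.simps I)
  also have "\<dots> = M + real n * M" using assms(1) by (simp add: x1 M_def)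
  finally show ?case by (simp add: M_def algebra_simps)
qed

lemma final_num:
  fixes K sK Lt g Du C :: real
  assumes "2 \<le> K" "sK = sqrt K" "0 < Lt" "0 \<le> g" "K - 1 \<le> K * Lt / 2" "Du + 2 / K \<le> C"
  shows "g * (K - 1) / sK + (g / (sK * Lt))^2 + 2 * (g / (sK * Lt)) + Du
         \<le> C + g^2 / Lt^2 + K * g * Lt / 2"
proof -
  define a where "a = g / Lt"
  have sK1: "1 \<le> sK" using assms(1,2) by simp
  have sK2: "sK^2 = K" using assms(1,2) by simp
  have sKp: "0 < sK" using sK1 by simp
  have e1: "(g / (sK * Lt))^2 = a^2 / K" unfolding a_def using sK2 by (simp add: power_divide power_mult_distrib)
  have e2: "2 * (g / (sK * Lt)) = 2 * a / sK" unfolding a_def by simp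
  have e3: "g^2 / Lt^2 = a^2" unfolding a_def by (simp add: power_divide)
  have "a^2 / K \<le> a^2 / 2" using assms(1) by (intro divide_left_mono) auto
  moreover have "2 * a / sK \<le> a^2 / 2 + 2 / K"
  proof -
    have "0 \<le> (a - 2 / sK)^2 / 2" by simp
    also have "(a - 2 / sK)^2 / 2 = a^2 / 2 - 2 * a / sK + 2 / K"
      using sKp unfolding sK2[symmetric] by (simp add: power2_eq_square field_simps)
    finally show ?thesis by simp
  qed
  moreover have "g * (K - 1) / sK \<le> K * g * Lt / 2"
  proof -
    have "g * (K - 1) / sK \<le> g * (K - 1)"
    proof -
      have "0 \<le> g * (K - 1)" using assms(1,4) by simp
      then have "g * (K - 1) * 1 \<le> g * (K - 1) * sK" using sK1 by (intro mult_left_mono) auto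
      then show ?thesis using sKp by (simp add: divide_le_eq)
    qed
    also have "\<dots> \<le> g * (K * Lt / 2)" using assms(4,5) by (rule mult_left_mono[rotated])
    finally show ?thesis by (simp add: algebra_simps)
  qed
  ultimately show ?thesis unfolding e1 e2 e3 using assms(6) by linarith
qed



theorem lemma6:
  fixes P :: "'k::finite \<Rightarrow> real measure"
    and \<alpha> :: real and \<gamma> :: "nat \<Rightarrow> real" and T :: nat and y :: "'k \<Rightarrow> real"
  assumes "\<And>a. prob_space (P a)"
    and "\<And>a. sets (P a) = sets borel"
    and "\<And>a. AE l in P a. 0 \<le> l \<and> l \<le> 1"
    and "0 \<le> \<alpha>" and "\<alpha> \<le> 1"
    and "\<And>n. 0 < \<gamma> n"
    and "\<And>n. 2 \<le> n \<Longrightarrow> \<gamma> n \<le> (ln (real n))^2"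
    and "(\<lambda>n. \<gamma> n / (ln (real n))^2) \<longlonglongrightarrow> 0"
    and "\<alpha> < 1/3 \<Longrightarrow> (\<lambda>n. ln (real n) / \<gamma> n) \<longlonglongrightarrow> 0"
    and "CARD('k) \<le> T"
    and "y \<in> simplex_eps (ln (real T) / sqrt (real T))"
  shows
    "(let K = real CARD('k);
          \<eta> = 1 / sqrt (real T);
          \<epsilon> = ln (real T) / sqrt (real T);
          lam = \<gamma> T / sqrt (K * real T);
          C = (if \<alpha> < 1/3 then 3 * K * ln (real T) / 2 else 3 * K * ln K)
      in rexp3_expected_cum P \<alpha> \<eta> \<epsilon> lam T (rexp3_x1 \<alpha> \<epsilon>) / real T
           - (\<Sum>i\<in>UNIV. mean_loss P i * y i)
         \<le> C / sqrt (real T) + K / sqrt (real T)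
            + (1 / sqrt (real T)) * (\<gamma> T ^ 2 / (ln (real T))^2)
            + K * \<gamma> T * ln (real T) / (2 * sqrt (real T)))"
proof -
  define K where "K = real CARD('k)"
  define \<eta> where "\<eta> = 1 / sqrt (real T)"
  define \<epsilon> where "\<epsilon> = ln (real T) / sqrt (real T)"
  define lam where "lam = \<gamma> T / sqrt (K * real T)"
  define C where "C = (if \<alpha> < 1/3 then 3 * K * ln (real T) / 2 else 3 * K * ln K)"
  define E where "E = rexp3_expected_cum P \<alpha> \<eta> \<epsilon> lam T (rexp3_x1 \<alpha> \<epsilon>)"
  define muy where "muy = (\<Sum>i\<in>UNIV. mean_loss P i * y i)"
  define R where "R = sqrt (real T)"
  define Lt where "Lt = ln (real T)"
  define g where "g = \<gamma> T"
  define RHS where "RHS = C / R + K / R + (1 / R) * (g ^ 2 / Lt^2) + K * g * Lt / (2 * R)"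
  have Kc: "1 \<le> CARD('k)" by (simp add: Suc_leI)
  have T1: "1 \<le> T" using Kc assms(10) by linarith
  have R0: "0 < R" using T1 by (simp add: R_def)
  have RR: "R * R = real T" using T1 by (simp add: R_def)
  have Lt0: "0 \<le> Lt" using T1 by (simp add: Lt_def)
  have g0: "0 < g" using assms(6) by (simp add: g_def)
  have K1: "1 \<le> K" using Kc by (simp add: K_def)
  have yS: "y \<in> simplex_eps \<epsilon>" using assms(11) by (simp add: \<epsilon>_def)
  have muy0: "0 \<le> muy" unfolding muy_def
  proof (intro sum_nonneg mult_nonneg_nonneg)
    fix i
    show "0 \<le> y i" using yS T1 by (auto simp: simplex_eps_def \<epsilon>_def intro: order_trans[rotated])
    show "0 \<le> mean_loss P i"
    proof -
      interpret prob_space "P i" by (rule assms(1))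
      show ?thesis unfolding mean_loss_def
        using assms(3)[of i] by (intro integral_nonneg_AE) (auto elim: eventually_mono)
    qed
  qed
  have C0: "0 \<le> C" using K1 Lt0 by (auto simp: C_def Lt_def)
  have rhs_ge: "K / R \<le> RHS"
  proof -
    have "0 \<le> C / R" using C0 R0 by simp
    moreover have "0 \<le> (1 / R) * (g ^ 2 / Lt^2)" using R0 by simp
    moreover have "0 \<le> K * g * Lt / (2 * R)" using R0 K1 g0 Lt0 by simp
    ultimately show ?thesis unfolding RHS_def by linarith
  qed
  have main: "E / real T - muy \<le> RHS"
  proof (cases "CARD('k) = 1")
    case True
    have x1S: "(rexp3_x1 \<alpha> \<epsilon> :: 'k \<Rightarrow> real) \<in> simplex_eps \<epsilon>"
      unfolding rexp3_x1_def by (rule card1_proj[OF True yS])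
    have "E = real T * (\<Sum>i\<in>UNIV. mean_loss P i)"
      unfolding E_def by (rule card1_E[OF True assms(1) x1S])
    moreover have "muy = (\<Sum>i\<in>UNIV. mean_loss P i)"
      using card1_simplex[OF True yS] by (simp add: muy_def)
    ultimately have "E / real T - muy = 0" using T1 by simp
    moreover have "0 \<le> K / R" using K1 R0 by simp
    ultimately show ?thesis using rhs_ge by linarith
  next
    case False
    then have Kc2: "2 \<le> CARD('k)" using Kc by linarith
    then have K2: "2 \<le> K" by (simp add: K_def)
    have T2: "2 \<le> T" using Kc2 assms(10) by linarith
    have Ltp: "0 < Lt" using T2 by (simp add: Lt_def)
    have eps0: "0 < \<epsilon>" using T2 by (simp add: \<epsilon>_def)
    have eta0: "0 < \<eta>" using T2 by (simp add: \<eta>_def)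
    have lam0: "0 \<le> lam"
    proof -
      have "0 \<le> sqrt (K * real T)" using K1 by simp
      then show ?thesis using g0 unfolding lam_def g_def by simp
    qed
    have ne: "simplex_eps \<epsilon> \<noteq> ({} :: ('k \<Rightarrow> real) set)" using yS by auto
    have upos: "\<And>i::'k. 0 < 1 / real CARD('k)" by simp
    have x1S: "(rexp3_x1 \<alpha> \<epsilon> :: 'k \<Rightarrow> real) \<in> simplex_eps \<epsilon>"
      unfolding rexp3_x1_def by (rule proj_props(1)[OF assms(4,5) eps0 ne]) simp
    show ?thesis
    proof (cases "real T \<le> K^2")
      case True
      have "E \<le> real T * 1"
        unfolding E_def
        by (rule E_trivial[OF assms(1,2,3,4,5) eps0 eta0 lam0 x1S])
           (rule mu_bounds(2)[OF assms(1,2,3,4,5) eps0 eta0 lam0])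
      then have "E / real T \<le> 1" using T1 by (simp add: divide_le_eq)
      moreover have "1 \<le> K / R"
      proof -
        have "R \<le> sqrt (K^2)" unfolding R_def using True by (rule real_sqrt_le_mono)
        then have "R \<le> K" using K1 by simp
        then show ?thesis using R0 by simp
      qed
      ultimately show ?thesis using rhs_ge muy0 by linarith
    next
      case False
      then have TK: "K^2 < real T" by simp
      have "2 * 2 \<le> K * K" using K2 by (intro mult_mono) auto
      then have T4: "4 < real T" using TK by (simp add: power2_eq_square)
      have Lt1: "1 \<le> Lt"
      proof -
        have "exp 1 \<le> real T" using exp_le T4 by linarith
        then have "ln (exp 1) \<le> ln (real T)" using T4 by (subst ln_le_cancel_iff) auto
        then show ?thesis by (simp add: Lt_def)
      qed
      have lnK: "2 * ln K < Lt"
      proof -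
        have "ln (K^2) < ln (real T)" using TK K2 T1 by (subst ln_less_cancel_iff) auto
        then show ?thesis using K2 by (simp add: Lt_def ln_realpow)
      qed
      have KlnK: "K - 1 \<le> K * ln K"
      proof -
        have "ln (1 / K) \<le> 1 / K - 1" using K2 by (intro ln_le_minus_one) auto
        then have "- ln K \<le> 1 / K - 1" using K2 by (simp add: ln_div)
        then have "K * (- ln K) \<le> K * (1 / K - 1)" using K2 by (intro mult_left_mono) auto
        then show ?thesis using K2 by (simp add: algebra_simps)
      qed
      have cond1: "K - 1 \<le> K * Lt / 2"
      proof -
        have "K * ln K \<le> K * (Lt / 2)" using lnK K2 by (intro mult_left_mono) auto
        then show ?thesis using KlnK by simp
      qed
      define u where "u = (\<lambda>_::'k. 1 / real CARD('k))"
      define Du where "Du = bregman \<alpha> y u"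
      have Dx: "bregman \<alpha> y (rexp3_x1 \<alpha> \<epsilon>) \<le> Du"
        unfolding rexp3_x1_def Du_def u_def by (rule proj_props(2)[OF assms(4,5) eps0 ne _ yS]) simp
      have cond2: "Du + 2 / K \<le> C"
      proof (cases "\<alpha> < 1/3")
        case True
        have D1: "Du \<le> 3/2 * K * ln (1 / (K * \<epsilon>))"
          unfolding Du_def u_def K_def by (rule breg_unif_small[OF assms(4) True eps0 yS])
        have "ln (1 / (K * \<epsilon>)) \<le> Lt / 2"
        proof -
          have "1 * 1 \<le> K * Lt" using K2 Lt1 by (intro mult_mono) auto
          then have KL: "1 \<le> K * Lt" by simp
          have e: "1 / (K * \<epsilon>) = R / (K * Lt)" using R0 by (simp add: \<epsilon>_def R_def Lt_def)
          have pos: "0 < R / (K * Lt)" using R0 K2 Lt1 by simp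
          have "R * 1 \<le> R * (K * Lt)" using R0 KL by (intro mult_left_mono) auto
          then have "R / (K * Lt) \<le> R" using KL by (simp add: divide_le_eq)
          then have "ln (R / (K * Lt)) \<le> ln R" using pos by (subst ln_le_cancel_iff) auto
          moreover have "ln R = Lt / 2" using T1 by (simp add: R_def Lt_def ln_sqrt)
          ultimately show ?thesis using e by simp
        qed
        then have "3/2 * K * ln (1 / (K * \<epsilon>)) \<le> 3/2 * K * (Lt / 2)" using K2 by (intro mult_left_mono) auto
        then have "Du \<le> 3/4 * K * Lt" using D1 by simp
        moreover have "2 / K \<le> 1" using K2 by simp
        moreover have "1 \<le> 3/4 * K * Lt"
        proof -
          have "2 * 1 \<le> K * Lt" using K2 Lt1 by (intro mult_mono) auto
          then show ?thesis by simp
        qed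
        moreover have "C = 3 * K * Lt / 2" using True by (simp add: C_def Lt_def)
        ultimately show ?thesis by linarith
      next
        case False
        have D1: "Du \<le> 3 * (K - 1)"
          unfolding Du_def u_def K_def by (rule breg_unif_large[OF _ assms(5) eps0 yS]) (use False in simp)
        have CC: "C = 3 * K * ln K" using False by (simp add: C_def)
        show ?thesis
        proof (cases "CARD('k) = 2")
          case True
          then have "K = 2" by (simp add: K_def)
          then show ?thesis using D1 CC ln2_ge by simp
        next
          case False
          then have "3 \<le> K" using Kc2 by (simp add: K_def)
          then have "exp 1 \<le> K" using exp_le by linarith
          then have "ln (exp 1) \<le> ln K" using K2 by (subst ln_le_cancel_iff) auto
          then have "1 \<le> ln K" by simp
          then have "3 * K * 1 \<le> 3 * K * ln K" using K2 by (intro mult_left_mono) auto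
          then have h: "3 * K \<le> C" using CC by simp
          have "2 / K \<le> 1" using K2 by simp
          then have "Du + 2 / K \<le> 3 * (K - 1) + 1" using D1 by (intro add_mono)
          also have "\<dots> \<le> 3 * K" by simp
          finally show ?thesis using h by simp
        qed
      qed
      define c where "c = lam * (K - 1) + \<eta> * ((lam / \<epsilon>)^2 + 2 * (lam / \<epsilon>) + K)"
      have Eup: "E \<le> real T * (muy + c) + bregman \<alpha> y (rexp3_x1 \<alpha> \<epsilon>) / \<eta>"
        using E_upper[OF assms(1,2,3,4,5) eps0 eta0 lam0 x1S yS, where n=T]
        unfolding E_def muy_def c_def K_def by simp
      have "bregman \<alpha> y (rexp3_x1 \<alpha> \<epsilon>) / \<eta> = R * bregman \<alpha> y (rexp3_x1 \<alpha> \<epsilon>)"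
        by (simp add: \<eta>_def R_def)
      also have "\<dots> \<le> R * Du" using Dx R0 by (intro mult_left_mono) auto
      finally have "E \<le> real T * (muy + c) + R * Du" using Eup by linarith
      then have "E / real T \<le> muy + c + R * Du / real T" using T1 by (simp add: divide_le_eq algebra_simps)
      moreover have "R * Du / real T = Du / R" using R0 RR[symmetric] by (simp add: field_simps)
      ultimately have L1: "E / real T - muy \<le> c + Du / R" by simp
      define sK where "sK = sqrt K"
      have sK0: "0 < sK" using K2 by (simp add: sK_def)
      have lamE: "lam = g / (sK * R)" by (simp add: lam_def g_def sK_def R_def real_sqrt_mult)
      have lamEps: "lam / \<epsilon> = g / (sK * Lt)"
        using R0 sK0 Ltp by (simp add: lamE \<epsilon>_def R_def[symmetric] Lt_def[symmetric] field_simps)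
      have "c + Du / R = (g * (K - 1) / sK + (g / (sK * Lt))^2 + 2 * (g / (sK * Lt)) + Du + K) / R"
        using R0 sK0 unfolding c_def lamEps by (simp add: lamE \<eta>_def R_def[symmetric] field_simps)
      also have "\<dots> \<le> (C + g^2 / Lt^2 + K * g * Lt / 2 + K) / R"
      proof (intro divide_right_mono)
        have "g * (K - 1) / sK + (g / (sK * Lt))^2 + 2 * (g / (sK * Lt)) + Du
          \<le> C + g^2 / Lt^2 + K * g * Lt / 2"
          by (rule final_num[OF K2 sK_def Ltp _ cond1 cond2]) (use g0 in simp)
        then show "g * (K - 1) / sK + (g / (sK * Lt))^2 + 2 * (g / (sK * Lt)) + Du + K
          \<le> C + g^2 / Lt^2 + K * g * Lt / 2 + K" by simp
      qed (use R0 in simp)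
      also have "\<dots> = RHS" unfolding RHS_def using R0 by (simp add: field_simps)
      finally show ?thesis using L1 by simp
    qed
  qed
  show ?thesis using main
    unfolding Let_def E_def muy_def RHS_def C_def K_def \<eta>_def \<epsilon>_def lam_def R_def Lt_def g_def
    by simp
qed


end
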